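(* Let $\Omega_{\mathrm{DS}}^{\mathrm{(S1)}}$ be the class of all sequences $\{\Gamma_n^{\mathrm{Sp}}(A)\}_{n\in\mathbb{N}}$ of subsets of $\mathbb{R}$ such that $A\in\Omega_{\mathrm{DS}}$ and $d_{\mathrm{H}}(\Gamma_n^{\mathrm{Sp}}(A),\mathrm{Sp}(A))\le 2^{-n}$ for all $n\in\mathbb{N}$, and let $\Lambda_{\mathrm{(S1)}}$ be the evaluation set allowing an algorithm to read the individual terms $\Gamma_n^{\mathrm{Sp}}(A)$ of the input sequence. Let $\Xi_{\mathrm{Lm}}$ assign to such an input the Lebesgue measure $|\mathrm{Sp}(A)|$. Then $\{\Xi_{\mathrm{Lm}},\Omega_{\mathrm{DS}}^{\mathrm{(S1)}},\mathbb{R}_{\ge0},\Lambda_{\mathrm{(S1)}}\}\notin\Delta_1^G$.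
   Context: $\Omega_{\mathrm{DS}}$ is the class of discrete Schrödinger operators on $\ell^2(\mathbb{Z})$, $[A\psi](n)=\psi(n-1)+\psi(n+1)+V(n)\psi(n)$ with $V:\mathbb{Z}\to\mathbb{R}$ bounded. $\mathrm{Sp}(A)$ is the spectrum and $d_{\mathrm{H}}$ the Hausdorff distance between subsets of $\mathbb{R}$. SCI framework: a computational problem $\{\Xi,\Omega,\mathcal{M},\Lambda\}$ consists of inputs $\Omega$, a metric space $(\mathcal{M},d)$, a map $\Xi:\Omega\to\mathcal{M}$ and a set $\Lambda$ of functions on $\Omega$ (readable information). A general algorithm is a map $\Gamma:\Omega\to\mathcal{M}$ such that for each input $A$ there is a finite set $\Lambda_\Gamma(A)\subset\Lambda$ with: if $B\in\Omega$ and $f(B)=f(A)$ for all $f\in\Lambda_\Gamma(A)$, then $\Lambda_\Gamma(B)=\Lambda_\Gamma(A)$ and $\Gamma(B)=\Gamma(A)$. The problem is in $\Delta_1^G$ if there exist general algorithms $\Gamma_n$ with $d(\Gamma_n(A),\Xi(A))\le 2^{-n}$ for all $A\in\Omega$ and $n\in\mathbb{N}$. *)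

theory Defs
  imports "HOL-Analysis.Analysis"
begin

definition l2 :: "(int \<Rightarrow> complex) set" where
  "l2 = {\<psi>. (\<lambda>n. (cmod (\<psi> n))\<^sup>2) summable_on UNIV}"

definition l2norm :: "(int \<Rightarrow> complex) \<Rightarrow> real" where
  "l2norm \<psi> = sqrt (infsum (\<lambda>n. (cmod (\<psi> n))\<^sup>2) UNIV)"

definition schrod :: "(int \<Rightarrow> real) \<Rightarrow> (int \<Rightarrow> complex) \<Rightarrow> (int \<Rightarrow> complex)" where
  "schrod V \<psi> = (\<lambda>n. \<psi> (n - 1) + \<psi> (n + 1) + complex_of_real (V n) * \<psi> n)"

definition l2_invertible :: "((int \<Rightarrow> complex) \<Rightarrow> (int \<Rightarrow> complex)) \<Rightarrow> bool" where
  "l2_invertible T \<longleftrightarrow>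
     (\<exists>B. (\<forall>\<psi>\<in>l2. B \<psi> \<in> l2) \<and>
          (\<exists>C. \<forall>\<psi>\<in>l2. l2norm (B \<psi>) \<le> C * l2norm \<psi>) \<and>
          (\<forall>\<psi>\<in>l2. B (T \<psi>) = \<psi> \<and> T (B \<psi>) = \<psi>))"

definition Sp :: "(int \<Rightarrow> real) \<Rightarrow> real set" where
  "Sp V = {z::real. \<not> l2_invertible (\<lambda>\<psi> n. schrod V \<psi> n - complex_of_real z * \<psi> n)}"

definition dH :: "real set \<Rightarrow> real set \<Rightarrow> ennreal" where
  "dH S T = max (SUP x\<in>S. INF y\<in>T. ennreal (dist x y)) (SUP y\<in>T. INF x\<in>S. ennreal (dist x y))"

definition general_algorithm :: "'a set \<Rightarrow> ('a \<Rightarrow> 'b) set \<Rightarrow> ('a \<Rightarrow> 'm) \<Rightarrow> bool" where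
  "general_algorithm \<Omega> \<Lambda> \<Gamma> \<longleftrightarrow>
     (\<exists>L :: 'a \<Rightarrow> ('a \<Rightarrow> 'b) set. \<forall>A\<in>\<Omega>. finite (L A) \<and> L A \<subseteq> \<Lambda> \<and>
        (\<forall>B\<in>\<Omega>. (\<forall>f\<in>L A. f B = f A) \<longrightarrow> L B = L A \<and> \<Gamma> B = \<Gamma> A))"

definition Delta1G :: "('a \<Rightarrow> 'm) \<Rightarrow> 'a set \<Rightarrow> 'm set \<Rightarrow> ('m \<Rightarrow> 'm \<Rightarrow> real)
                         \<Rightarrow> ('a \<Rightarrow> 'b) set \<Rightarrow> bool" where
  "Delta1G \<Xi> \<Omega> M d \<Lambda> \<longleftrightarrow>
     (\<exists>\<Gamma> :: nat \<Rightarrow> 'a \<Rightarrow> 'm. \<forall>n. general_algorithm \<Omega> \<Lambda> (\<Gamma> n) \<and>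
        (\<forall>A\<in>\<Omega>. \<Gamma> n A \<in> M \<and> d (\<Gamma> n A) (\<Xi> A) \<le> (1/2) ^ n))"

text \<open>Input sequences are indexed by k :: nat, where term k stands for
  Gamma_n with n = k + 1 (so N = {1,2,...}).\<close>

definition Omega_S1 :: "(nat \<Rightarrow> real set) set" where
  "Omega_S1 = {S. \<exists>V :: int \<Rightarrow> real. bounded (range V) \<and>
                 (\<forall>k. dH (S k) (Sp V) \<le> ennreal ((1/2) ^ Suc k))}"

definition Lambda_S1 :: "((nat \<Rightarrow> real set) \<Rightarrow> real set) set" where
  "Lambda_S1 = range (\<lambda>k S. S k)"

definition Xi_Lm :: "(nat \<Rightarrow> real set) \<Rightarrow> real" where
  "Xi_Lm S = measure lebesgue (Sp (SOME V. bounded (range V) \<and>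
                 (\<forall>k. dH (S k) (Sp V) \<le> ennreal ((1/2) ^ Suc k))))"

end

theory Submission
  imports Defs
begin
definition nb :: "(int \<Rightarrow> complex) \<Rightarrow> real \<Rightarrow> bool" where
  "nb \<psi> M \<longleftrightarrow> (\<forall>F. finite F \<longrightarrow> L2_set (\<lambda>n. cmod (\<psi> n)) F \<le> M)"

lemma L2_set_sq: "finite F \<Longrightarrow> (L2_set f F)\<^sup>2 = (\<Sum>n\<in>F. (f n)\<^sup>2)"
  unfolding L2_set_def by (simp add: sum_nonneg)

lemma nb_nonneg: "nb \<psi> M \<Longrightarrow> 0 \<le> M"
  unfolding nb_def by (metis L2_set_empty finite.emptyI)

lemma nb_sumsq: assumes "nb \<psi> M" "finite F" shows "(\<Sum>n\<in>F. (cmod (\<psi> n))\<^sup>2) \<le> M\<^sup>2"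
proof -
  have "L2_set (\<lambda>n. cmod (\<psi> n)) F \<le> M" using assms unfolding nb_def by auto
  hence "(L2_set (\<lambda>n. cmod (\<psi> n)) F)\<^sup>2 \<le> M\<^sup>2" by (intro power_mono) auto
  thus ?thesis using L2_set_sq[OF assms(2)] by simp
qed

lemma nb_l2: assumes "nb \<psi> M" shows "\<psi> \<in> l2" "l2norm \<psi> \<le> M"
proof -
  have M0: "0 \<le> M" using nb_nonneg[OF assms] .
  have sm: "(\<lambda>n. (cmod (\<psi> n))\<^sup>2) summable_on UNIV"
    by (rule nonneg_bdd_above_summable_on) (auto intro!: bdd_aboveI[where M="M\<^sup>2"] nb_sumsq[OF assms])
  thus "\<psi> \<in> l2" unfolding l2_def by simp
  have "infsum (\<lambda>n. (cmod (\<psi> n))\<^sup>2) UNIV \<le> M\<^sup>2"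
    by (rule infsum_le_finite_sums[OF sm]) (rule nb_sumsq[OF assms])
  hence "l2norm \<psi> \<le> sqrt (M\<^sup>2)" unfolding l2norm_def by (rule real_sqrt_le_mono)
  thus "l2norm \<psi> \<le> M" using M0 by simp
qed

lemma l2norm_nonneg: "0 \<le> l2norm \<psi>"
  unfolding l2norm_def by (simp add: infsum_nonneg)

lemma l2_nb: assumes "\<psi> \<in> l2" shows "nb \<psi> (l2norm \<psi>)"
  unfolding nb_def
proof (intro allI impI)
  fix F :: "int set" assume F: "finite F"
  have sm: "(\<lambda>n. (cmod (\<psi> n))\<^sup>2) summable_on UNIV" using assms unfolding l2_def by simp
  have "(\<Sum>n\<in>F. (cmod (\<psi> n))\<^sup>2) \<le> infsum (\<lambda>n. (cmod (\<psi> n))\<^sup>2) UNIV"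
    by (rule finite_sum_le_infsum[OF sm F]) auto
  thus "L2_set (\<lambda>n. cmod (\<psi> n)) F \<le> l2norm \<psi>"
    unfolding L2_set_def l2norm_def by (simp add: real_sqrt_le_mono)
qed

lemma nb_iff: "\<psi> \<in> l2 \<Longrightarrow> 0 \<le> M \<Longrightarrow> nb \<psi> M \<longleftrightarrow> l2norm \<psi> \<le> M"
  using nb_l2 l2_nb unfolding nb_def by (meson order_trans)

lemma nb_mono: "nb \<psi> M \<Longrightarrow> M \<le> M' \<Longrightarrow> nb \<psi> M'"
  unfolding nb_def by (meson order_trans)

lemma nb_add: assumes "nb \<psi> a" "nb \<phi> b" shows "nb (\<lambda>n. \<psi> n + \<phi> n) (a + b)"
  unfolding nb_def
proof (intro allI impI)
  fix F :: "int set" assume F: "finite F"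
  have "L2_set (\<lambda>n. cmod (\<psi> n + \<phi> n)) F \<le> L2_set (\<lambda>n. cmod (\<psi> n) + cmod (\<phi> n)) F"
    by (rule L2_set_mono) (auto simp: norm_triangle_ineq)
  also have "\<dots> \<le> L2_set (\<lambda>n. cmod (\<psi> n)) F + L2_set (\<lambda>n. cmod (\<phi> n)) F"
    by (rule L2_set_triangle_ineq)
  also have "\<dots> \<le> a + b" using assms F unfolding nb_def by (meson add_mono)
  finally show "L2_set (\<lambda>n. cmod (\<psi> n + \<phi> n)) F \<le> a + b" .
qed

lemma nb_dom: assumes "nb \<psi> M" "0 \<le> c" "\<And>n. cmod (\<phi> n) \<le> c * cmod (\<psi> n)" shows "nb \<phi> (c * M)"
  unfolding nb_def
proof (intro allI impI)
  fix F :: "int set" assume F: "finite F"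
  have "L2_set (\<lambda>n. cmod (\<phi> n)) F \<le> L2_set (\<lambda>n. c * cmod (\<psi> n)) F"
    by (rule L2_set_mono) (auto simp: assms)
  also have "\<dots> = c * L2_set (\<lambda>n. cmod (\<psi> n)) F" using L2_set_right_distrib[OF assms(2), of "\<lambda>n. cmod (\<psi> n)" F] by simp
  also have "\<dots> \<le> c * M" using assms F unfolding nb_def by (simp add: mult_left_mono)
  finally show "L2_set (\<lambda>n. cmod (\<phi> n)) F \<le> c * M" .
qed

lemma nb_shift: assumes "nb \<psi> M" shows "nb (\<lambda>n. \<psi> (n + k)) M"
  unfolding nb_def
proof (intro allI impI)
  fix F :: "int set" assume F: "finite F"
  have "L2_set (\<lambda>n. cmod (\<psi> (n + k))) F = L2_set (\<lambda>n. cmod (\<psi> n)) ((\<lambda>n. n + k) ` F)"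
    unfolding L2_set_def by (subst sum.reindex) (auto simp: inj_on_def)
  also have "\<dots> \<le> M" using assms F unfolding nb_def by auto
  finally show "L2_set (\<lambda>n. cmod (\<psi> (n + k))) F \<le> M" .
qed

lemma nb_zero: "nb (\<lambda>n. 0) 0"
  unfolding nb_def by (simp add: L2_set_0')

lemma nb_pt: assumes "nb \<psi> M" shows "cmod (\<psi> n) \<le> M"
proof -
  have "finite {n}" by simp
  hence "L2_set (\<lambda>n. cmod (\<psi> n)) {n} \<le> M" using assms unfolding nb_def by blast
  thus ?thesis unfolding L2_set_def by simp
qed

lemma nb_sum: assumes "finite S" "\<And>k. k \<in> S \<Longrightarrow> nb (\<psi> k) (M k)"
  shows "nb (\<lambda>n. \<Sum>k\<in>S. \<psi> k n) (\<Sum>k\<in>S. M k)"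
  using assms
proof (induction S rule: finite_induct)
  case empty thus ?case by (simp add: nb_zero)
next
  case (insert x F)
  thus ?case by (simp add: nb_add)
qed

lemma nb_scale: assumes "nb \<psi> M" shows "nb (\<lambda>n. a * \<psi> n) (cmod a * M)"
  by (rule nb_dom[OF assms]) (auto simp: norm_mult)

lemma nb_uminus: assumes "nb \<psi> M" shows "nb (\<lambda>n. - \<psi> n) M"
  using nb_dom[OF assms, of 1] by simp

lemma nb_diff: assumes "nb \<psi> a" "nb \<phi> b" shows "nb (\<lambda>n. \<psi> n - \<phi> n) (a + b)"
  using nb_add[OF assms(1) nb_uminus[OF assms(2)]] by simp

lemma nb_finsupp: assumes "finite S" "\<And>n. n \<notin> S \<Longrightarrow> \<psi> n = 0" "\<And>n. cmod (\<psi> n) \<le> B"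
  shows "nb \<psi> (sqrt (card S) * B)"
  unfolding nb_def
proof (intro allI impI)
  fix F :: "int set" assume F: "finite F"
  have "L2_set (\<lambda>n. cmod (\<psi> n)) F \<le> L2_set (\<lambda>n. cmod (\<psi> n)) (F \<union> S)"
    unfolding L2_set_def using F assms(1) by (intro real_sqrt_le_mono sum_mono2) auto
  also have "\<dots> = L2_set (\<lambda>n. cmod (\<psi> n)) S"
    unfolding L2_set_def using F assms(1,2) by (intro arg_cong[where f=sqrt] sum.mono_neutral_right) auto
  also have "\<dots> \<le> L2_set (\<lambda>n. B) S" by (rule L2_set_mono) (auto simp: assms)
  also have "\<dots> = sqrt (card S) * B"
    using L2_set_constant[of B S] assms(3)[of 0] norm_ge_zero[of "\<psi> 0"] by simp
  finally show "L2_set (\<lambda>n. cmod (\<psi> n)) F \<le> sqrt (card S) * B" .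
qed

lemma l2_zero_iff: assumes "\<psi> \<in> l2" shows "l2norm \<psi> = 0 \<longleftrightarrow> \<psi> = (\<lambda>n. 0)"
proof
  assume "l2norm \<psi> = 0"
  hence "nb \<psi> 0" using l2_nb[OF assms] by simp
  thus "\<psi> = (\<lambda>n. 0)" using nb_pt by fastforce
next
  assume "\<psi> = (\<lambda>n. 0)"
  thus "l2norm \<psi> = 0" unfolding l2norm_def by simp
qed

definition lin_on :: "((int \<Rightarrow> complex) \<Rightarrow> (int \<Rightarrow> complex)) \<Rightarrow> bool" where
  "lin_on T \<longleftrightarrow> (\<forall>a\<in>l2. \<forall>b\<in>l2. \<forall>c. T (\<lambda>n. a n + c * b n) = (\<lambda>n. T a n + c * T b n))"

lemma l2_add: "a \<in> l2 \<Longrightarrow> b \<in> l2 \<Longrightarrow> (\<lambda>n. a n + b n) \<in> l2"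
  using nb_add[OF l2_nb l2_nb] nb_l2 by blast
lemma l2_scale: "a \<in> l2 \<Longrightarrow> (\<lambda>n. c * a n) \<in> l2"
  using nb_scale[OF l2_nb] nb_l2 by blast
lemma l2_lc: "a \<in> l2 \<Longrightarrow> b \<in> l2 \<Longrightarrow> (\<lambda>n. a n + c * b n) \<in> l2"
  using l2_add l2_scale by blast
lemma l2_diff: "a \<in> l2 \<Longrightarrow> b \<in> l2 \<Longrightarrow> (\<lambda>n. a n - b n) \<in> l2"
  using l2_lc[of a b "-1"] by simp
lemma l2_zero: "(\<lambda>n. 0) \<in> l2" using nb_l2[OF nb_zero] by blast
lemma l2_shift: "a \<in> l2 \<Longrightarrow> (\<lambda>n. a (n + k)) \<in> l2"
  using nb_shift[OF l2_nb] nb_l2 by blast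

lemma lin_diff: assumes "lin_on T" "a \<in> l2" "b \<in> l2"
  shows "T (\<lambda>n. a n - b n) = (\<lambda>n. T a n - T b n)"
proof -
  have "T (\<lambda>n. a n + (-1) * b n) = (\<lambda>n. T a n + (-1) * T b n)" using assms unfolding lin_on_def by blast
  thus ?thesis by simp
qed

lemma lin_zero: assumes "lin_on T" shows "T (\<lambda>n. 0) = (\<lambda>n. 0)"
  using lin_diff[OF assms l2_zero l2_zero] by (metis (no_types) cancel_comm_monoid_add_class.diff_cancel diff_zero)

lemma lin_add: assumes "lin_on T" "a \<in> l2" "b \<in> l2"
  shows "T (\<lambda>n. a n + b n) = (\<lambda>n. T a n + T b n)"
proof -
  have "T (\<lambda>n. a n + 1 * b n) = (\<lambda>n. T a n + 1 * T b n)" using assms unfolding lin_on_def by blast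
  thus ?thesis by simp
qed

lemma lin_scale: assumes "lin_on T" "a \<in> l2"
  shows "T (\<lambda>n. c * a n) = (\<lambda>n. c * T a n)"
proof -
  have "T (\<lambda>n. 0 + c * a n) = (\<lambda>n. T (\<lambda>n. 0) n + c * T a n)"
    by (rule lin_on_def[THEN iffD1, rule_format, OF assms(1) l2_zero assms(2)])
  thus ?thesis using lin_zero[OF assms(1)] by simp
qed

lemma inv_intro:
  assumes lin: "lin_on T"
    and maps: "\<And>\<psi>. \<psi> \<in> l2 \<Longrightarrow> T \<psi> \<in> l2"
    and inj: "\<And>u. u \<in> l2 \<Longrightarrow> T u = (\<lambda>n. 0) \<Longrightarrow> u = (\<lambda>n. 0)"
    and sol: "\<And>\<phi>. \<phi> \<in> l2 \<Longrightarrow> \<exists>\<psi>\<in>l2. T \<psi> = \<phi> \<and> l2norm \<psi> \<le> C * l2norm \<phi>"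
  shows "l2_invertible T"
proof -
  define B where "B \<phi> = (SOME \<psi>. \<psi> \<in> l2 \<and> T \<psi> = \<phi> \<and> l2norm \<psi> \<le> C * l2norm \<phi>)" for \<phi>
  have B: "B \<phi> \<in> l2 \<and> T (B \<phi>) = \<phi> \<and> l2norm (B \<phi>) \<le> C * l2norm \<phi>" if "\<phi> \<in> l2" for \<phi>
    unfolding B_def using sol[OF that] by (rule someI_ex[where P="\<lambda>\<psi>. \<psi> \<in> l2 \<and> T \<psi> = \<phi> \<and> l2norm \<psi> \<le> C * l2norm \<phi>", OF bexE]) blast
  have uniq: "\<psi>1 = \<psi>2" if "\<psi>1 \<in> l2" "\<psi>2 \<in> l2" "T \<psi>1 = T \<psi>2" for \<psi>1 \<psi>2
  proof -
    have "T (\<lambda>n. \<psi>1 n - \<psi>2 n) = (\<lambda>n. 0)" using lin_diff[OF lin that(1,2)] that(3) by simp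
    hence "(\<lambda>n. \<psi>1 n - \<psi>2 n) = (\<lambda>n. 0)" using inj l2_diff[OF that(1,2)] by blast
    thus ?thesis by (metis (no_types) eq_iff_diff_eq_0 ext) 
  qed
  show ?thesis unfolding l2_invertible_def
  proof (intro exI[where x=B] conjI ballI exI[where x=C])
    fix \<psi> assume "\<psi> \<in> l2" thus "B \<psi> \<in> l2" using B by blast
  next
    fix \<psi> assume "\<psi> \<in> l2" thus "l2norm (B \<psi>) \<le> C * l2norm \<psi>" using B by blast
  next
    fix \<psi> assume "\<psi> \<in> l2" thus "T (B \<psi>) = \<psi>" using B by blast
  next
    fix \<psi> assume p: "\<psi> \<in> l2"
    hence Tl: "T \<psi> \<in> l2" by (rule maps)
    show "B (T \<psi>) = \<psi>" using B[OF Tl] uniq p by blast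
  qed
qed

lemma gp_bound: fixes q :: real assumes "0 \<le> q" "q < 1" "k \<le> j"
  shows "(\<Sum>i\<in>{k..<j}. q^i) \<le> q^k / (1 - q)"
proof -
  have "(\<Sum>i\<in>{k..<j}. q^i) = (q^k - q^j) / (1 - q)" using assms(3)
  proof (induction j)
    case 0 thus ?case by simp
  next
    case (Suc j)
    show ?case
    proof (cases "k = Suc j")
      case True thus ?thesis by simp
    next
      case False
      hence kj: "k \<le> j" using Suc.prems by simp
      have "(\<Sum>i\<in>{k..<Suc j}. q^i) = (\<Sum>i\<in>{k..<j}. q^i) + q^j" using kj by simp
      also have "\<dots> = (q^k - q^j) / (1 - q) + q^j" using Suc.IH kj by simp
      also have "\<dots> = (q^k - q^Suc j) / (1 - q)" using assms(2) by (simp add: field_simps)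
      finally show ?thesis .
    qed
  qed
  also have "\<dots> \<le> q^k / (1 - q)" by (rule divide_right_mono) (use assms in auto)
  finally show ?thesis .
qed

lemma neumann:
  assumes lin: "lin_on K" and q: "0 \<le> q" "q < 1"
    and Kb: "\<And>\<psi>. \<psi> \<in> l2 \<Longrightarrow> K \<psi> \<in> l2 \<and> l2norm (K \<psi>) \<le> q * l2norm \<psi>"
    and \<phi>: "\<phi> \<in> l2"
  shows "\<exists>\<psi>\<in>l2. (\<lambda>n. \<psi> n - K \<psi> n) = \<phi> \<and> l2norm \<psi> \<le> l2norm \<phi> / (1 - q)"
proof -
  define N where "N = l2norm \<phi>"
  have N0: "0 \<le> N" unfolding N_def by (rule l2norm_nonneg)
  define P where "P i = (K ^^ i) \<phi>" for i
  have P: "P i \<in> l2 \<and> l2norm (P i) \<le> q^i * N" for i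
  proof (induction i)
    case 0 thus ?case using \<phi> by (simp add: P_def N_def)
  next
    case (Suc i)
    have eq: "P (Suc i) = K (P i)" by (simp add: P_def)
    have "l2norm (K (P i)) \<le> q * l2norm (P i)" using Kb Suc by blast
    also have "\<dots> \<le> q * (q^i * N)" using Suc q by (intro mult_left_mono) auto
    finally show ?case using eq Kb Suc by simp
  qed
  have Pn: "cmod (P i n) \<le> q^i * N" for i n
    using nb_pt[OF nb_mono[OF l2_nb]] P by blast
  have summ: "summable (\<lambda>i. P i n)" for n
    by (rule summable_comparison_test'[where g="\<lambda>i. q^i * N" and N=0])
       (use q Pn in \<open>auto intro!: summable_mult2 summable_geometric\<close>)
  define \<psi> where "\<psi> n = (\<Sum>i. P i n)" for n
  define S where "S j = (\<lambda>n. \<Sum>i<j. P i n)" for j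
  have Slim: "(\<lambda>j. S j n) \<longlonglongrightarrow> \<psi> n" for n
    using summable_LIMSEQ[OF summ] unfolding S_def \<psi>_def by simp
  have S_nb: "nb (S j) (\<Sum>i<j. q^i * N)" for j
    unfolding S_def by (rule nb_sum) (use P in \<open>auto intro: nb_mono[OF l2_nb]\<close>)
  have S_l2: "S j \<in> l2" for j using nb_l2[OF S_nb] by blast
  have Sd: "nb (\<lambda>n. S j n - S k n) (q^k * N / (1 - q))" if "k \<le> j" for j k
  proof -
    have eq: "(\<lambda>n. S j n - S k n) = (\<lambda>n. \<Sum>i\<in>{k..<j}. P i n)"
      unfolding S_def using that
      by (auto simp: lessThan_atLeast0 intro!: ext sum_diff_nat_ivl)
    have "nb (\<lambda>n. \<Sum>i\<in>{k..<j}. P i n) (\<Sum>i\<in>{k..<j}. q^i * N)"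
      by (rule nb_sum) (use P in \<open>auto intro: nb_mono[OF l2_nb]\<close>)
    moreover have "(\<Sum>i\<in>{k..<j}. q^i * N) \<le> q^k * N / (1 - q)"
    proof -
      have "(\<Sum>i\<in>{k..<j}. q^i * N) = (\<Sum>i\<in>{k..<j}. q^i) * N" by (simp add: sum_distrib_right)
      also have "\<dots> \<le> q^k / (1 - q) * N" by (rule mult_right_mono[OF gp_bound[OF q that] N0])
      finally show ?thesis by simp
    qed
    ultimately show ?thesis unfolding eq by (rule nb_mono)
  qed
  have Lk: "nb (\<lambda>n. \<psi> n - S k n) (q^k * N / (1 - q))" for k
    unfolding nb_def
  proof (intro allI impI)
    fix F :: "int set" assume F: "finite F"
    have lim: "(\<lambda>j. L2_set (\<lambda>n. cmod (S j n - S k n)) F) \<longlonglongrightarrow> L2_set (\<lambda>n. cmod (\<psi> n - S k n)) F"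
      unfolding L2_set_def by (intro tendsto_intros Slim)
    show "L2_set (\<lambda>n. cmod (\<psi> n - S k n)) F \<le> q^k * N / (1 - q)"
      by (rule LIMSEQ_le_const2[OF lim]) (use Sd F in \<open>auto simp: nb_def\<close>)
  qed
  have S0: "S 0 = (\<lambda>n. 0)" unfolding S_def by simp
  have \<psi>nb: "nb \<psi> (N / (1 - q))" using Lk[of 0] S0 by simp
  have \<psi>l2: "\<psi> \<in> l2" and \<psi>bd: "l2norm \<psi> \<le> N / (1 - q)" using nb_l2[OF \<psi>nb] by auto
  have KS: "K (S j) = (\<lambda>n. S (Suc j) n - \<phi> n)" for j
  proof (induction j)
    case 0
    show ?case using lin_zero[OF lin] S0 by (simp add: S_def P_def)
  next
    case (Suc j)
    have eq: "S (Suc j) = (\<lambda>n. S j n + P j n)" unfolding S_def by simp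
    have "K (S (Suc j)) = (\<lambda>n. K (S j) n + K (P j) n)"
      unfolding eq by (rule lin_add[OF lin S_l2]) (use P in blast)
    also have "\<dots> = (\<lambda>n. S (Suc (Suc j)) n - \<phi> n)"
      using Suc.IH by (simp add: S_def P_def fun_eq_iff algebra_simps)
    finally show ?case .
  qed
  have "\<psi> n - K \<psi> n = \<phi> n" for n
  proof -
    have d: "(\<lambda>j. K \<psi> n - K (S j) n) \<longlonglongrightarrow> 0"
    proof (rule Lim_null_comparison[where g="\<lambda>j. q * (q^j * N / (1 - q))"])
      show "\<forall>\<^sub>F j in sequentially. norm (K \<psi> n - K (S j) n) \<le> q * (q^j * N / (1 - q))"
      proof (intro always_eventually allI)
        fix j
        have dl2: "(\<lambda>m. \<psi> m - S j m) \<in> l2" using l2_diff[OF \<psi>l2 S_l2] .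
        have eqd: "K \<psi> n - K (S j) n = K (\<lambda>m. \<psi> m - S j m) n"
          using lin_diff[OF lin \<psi>l2 S_l2] by simp
        have "cmod (K (\<lambda>m. \<psi> m - S j m) n) \<le> l2norm (K (\<lambda>m. \<psi> m - S j m))"
          using nb_pt[OF l2_nb] Kb[OF dl2] by blast
        also have "\<dots> \<le> q * l2norm (\<lambda>m. \<psi> m - S j m)" using Kb[OF dl2] by blast
        also have "\<dots> \<le> q * (q^j * N / (1 - q))"
          using nb_l2(2)[OF Lk[of j]] q by (intro mult_left_mono) auto
        finally show "norm (K \<psi> n - K (S j) n) \<le> q * (q^j * N / (1 - q))" using eqd by simp
      qed
      show "(\<lambda>j. q * (q^j * N / (1 - q))) \<longlonglongrightarrow> 0"
        using q by (intro tendsto_mult_right_zero tendsto_divide_zero tendsto_mult_left_zero LIMSEQ_power_zero) auto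
    qed
    have l1: "(\<lambda>j. K (S j) n) \<longlonglongrightarrow> K \<psi> n"
      using tendsto_diff[OF tendsto_const[of "K \<psi> n"] d] by simp
    have l2': "(\<lambda>j. K (S j) n) \<longlonglongrightarrow> \<psi> n - \<phi> n"
      unfolding KS using tendsto_diff[OF LIMSEQ_Suc[OF Slim] tendsto_const] by simp
    have "K \<psi> n = \<psi> n - \<phi> n" using LIMSEQ_unique[OF l1 l2'] .
    thus ?thesis by simp
  qed
  hence "(\<lambda>n. \<psi> n - K \<psi> n) = \<phi>" by auto
  thus ?thesis using \<psi>l2 \<psi>bd unfolding N_def by blast
qed

definition Top :: "(int \<Rightarrow> real) \<Rightarrow> real \<Rightarrow> (int \<Rightarrow> complex) \<Rightarrow> (int \<Rightarrow> complex)" where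
  "Top V z = (\<lambda>\<psi> n. schrod V \<psi> n - complex_of_real z * \<psi> n)"

lemma Sp_Top: "Sp V = {z. \<not> l2_invertible (Top V z)}"
  unfolding Sp_def Top_def ..

lemma cmod_ofr_diff[simp]: "cmod (complex_of_real a - complex_of_real b) = \<bar>a - b\<bar>"
  by (metis norm_of_real of_real_diff)

lemma Top_eq: "Top V z \<psi> n = \<psi> (n - 1) + \<psi> (n + 1) + complex_of_real (V n - z) * \<psi> n"
  unfolding Top_def schrod_def by (simp add: algebra_simps)

lemma lin_Top: "lin_on (Top V z)"
  unfolding lin_on_def Top_eq by (auto simp: fun_eq_iff algebra_simps)

lemma nb_hop: assumes "nb \<psi> M" shows "nb (\<lambda>n. \<psi> (n - 1) + \<psi> (n + 1)) (2 * M)"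
proof -
  have "nb (\<lambda>n. \<psi> (n + -1) + \<psi> (n + 1)) (M + M)" by (rule nb_add[OF nb_shift[OF assms] nb_shift[OF assms]])
  moreover have "(\<lambda>n. \<psi> (n + -1) + \<psi> (n + 1)) = (\<lambda>n. \<psi> (n - 1) + \<psi> (n + 1))" by simp
  moreover have "M + M = 2 * M" by simp
  ultimately show ?thesis by metis
qed

lemma Top_nb: assumes B: "\<And>n. \<bar>V n\<bar> \<le> B" and "nb \<psi> M"
  shows "nb (Top V z \<psi>) ((2 + B + \<bar>z\<bar>) * M)"
proof -
  have B0: "0 \<le> B" using B[of 0] by simp
  have "nb (\<lambda>n. complex_of_real (V n - z) * \<psi> n) ((B + \<bar>z\<bar>) * M)"
  proof (rule nb_dom[OF assms(2)])
    show "0 \<le> B + \<bar>z\<bar>" using B0 by simp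
    fix n
    have "\<bar>V n - z\<bar> \<le> B + \<bar>z\<bar>" using B[of n] by simp
    thus "cmod (complex_of_real (V n - z) * \<psi> n) \<le> (B + \<bar>z\<bar>) * cmod (\<psi> n)"
      by (simp add: norm_mult mult_right_mono)
  qed
  from nb_add[OF nb_hop[OF assms(2)] this] show ?thesis
    unfolding Top_eq[abs_def] by (simp add: algebra_simps)
qed

lemma Top_l2: assumes B: "\<And>n. \<bar>V n\<bar> \<le> B" and "\<psi> \<in> l2"
  shows "Top V z \<psi> \<in> l2" "l2norm (Top V z \<psi>) \<le> (2 + B + \<bar>z\<bar>) * l2norm \<psi>"
  using nb_l2[OF Top_nb[OF B l2_nb[OF assms(2)]]] by auto

lemma bounded_V: fixes V :: "int \<Rightarrow> real" assumes "bounded (range V)" shows "\<exists>B. \<forall>n. \<bar>V n\<bar> \<le> B"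
proof -
  obtain a where "\<forall>x\<in>range V. norm x \<le> a" using assms unfolding bounded_iff by blast
  hence "\<forall>n. \<bar>V n\<bar> \<le> a" by auto
  thus ?thesis by blast
qed

lemma gersh:
  assumes B: "\<And>n. \<bar>V n\<bar> \<le> B" and m: "m > 2" and d: "\<And>n. m \<le> \<bar>V n - z\<bar>"
  shows "l2_invertible (Top V z)"
proof (rule inv_intro[OF lin_Top])
  fix \<psi> :: "int \<Rightarrow> complex" assume "\<psi> \<in> l2" thus "Top V z \<psi> \<in> l2" by (rule Top_l2(1)[OF B])
next
  have below: "l2norm \<psi> \<le> l2norm (Top V z \<psi>) / (m - 2)" if p: "\<psi> \<in> l2" for \<psi>
  proof -
    have "nb \<psi> ((1/m) * (l2norm (Top V z \<psi>) + 2 * l2norm \<psi>))"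
    proof (rule nb_dom[OF nb_add[OF l2_nb[OF Top_l2(1)[OF B p]] nb_uminus[OF nb_hop[OF l2_nb[OF p]]]]])
      show "0 \<le> 1/m" using m by simp
      fix n
      have "m * cmod (\<psi> n) \<le> \<bar>V n - z\<bar> * cmod (\<psi> n)" using d[of n] by (simp add: mult_right_mono)
      also have "\<dots> = cmod (Top V z \<psi> n - (\<psi> (n - 1) + \<psi> (n + 1)))"
        by (simp add: Top_eq norm_mult)
      finally have h: "m * cmod (\<psi> n) \<le> cmod (Top V z \<psi> n - (\<psi> (n - 1) + \<psi> (n + 1)))" .
      have eq: "Top V z \<psi> n + - (\<psi> (n - 1) + \<psi> (n + 1)) = Top V z \<psi> n - (\<psi> (n - 1) + \<psi> (n + 1))"
        by (rule diff_conv_add_uminus[symmetric])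
      show "cmod (\<psi> n) \<le> 1/m * cmod (Top V z \<psi> n + - (\<psi> (n - 1) + \<psi> (n + 1)))"
        unfolding eq using h m by (simp add: field_simps)
    qed
    hence "l2norm \<psi> \<le> (1/m) * (l2norm (Top V z \<psi>) + 2 * l2norm \<psi>)" using nb_l2 by blast
    hence "m * l2norm \<psi> \<le> l2norm (Top V z \<psi>) + 2 * l2norm \<psi>" using m by (simp add: field_simps)
    hence "(m - 2) * l2norm \<psi> \<le> l2norm (Top V z \<psi>)" by (simp add: algebra_simps)
    thus ?thesis using m by (simp add: field_simps)
  qed
  fix u :: "int \<Rightarrow> complex" assume "u \<in> l2" "Top V z u = (\<lambda>n. 0)"
  hence "l2norm u \<le> 0" using below[of u] by (simp add: l2norm_def)
  thus "u = (\<lambda>n. 0)" using l2_zero_iff[OF \<open>u \<in> l2\<close>] l2norm_nonneg[of u] by simp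
next
  fix \<phi> :: "int \<Rightarrow> complex" assume \<phi>: "\<phi> \<in> l2"
  define K where "K \<psi> = (\<lambda>n. - (\<psi> (n - 1) + \<psi> (n + 1)) / complex_of_real (V n - z))" for \<psi> :: "int \<Rightarrow> complex"
  define \<phi>' where "\<phi>' = (\<lambda>n. \<phi> n / complex_of_real (V n - z))"
  have nz: "V n - z \<noteq> 0" for n using d[of n] m by auto
  have \<phi>'nb: "nb \<phi>' ((1/m) * l2norm \<phi>)"
  proof (rule nb_dom[OF l2_nb[OF \<phi>]])
    show "0 \<le> 1/m" using m by simp
    fix n
    have "cmod (\<phi>' n) = cmod (\<phi> n) / \<bar>V n - z\<bar>" unfolding \<phi>'_def by (simp add: norm_divide)
    also have "\<dots> \<le> cmod (\<phi> n) / m" using d[of n] m by (intro divide_left_mono) auto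
    finally show "cmod (\<phi>' n) \<le> 1/m * cmod (\<phi> n)" by simp
  qed
  have Knb: "nb (K \<psi>) ((2/m) * M)" if "nb \<psi> M" for \<psi> M
  proof -
    have "nb (K \<psi>) ((1/m) * (2 * M))"
    proof (rule nb_dom[OF nb_hop[OF that]])
      show "0 \<le> 1/m" using m by simp
      fix n
      have "cmod (K \<psi> n) = cmod (\<psi> (n - 1) + \<psi> (n + 1)) / \<bar>V n - z\<bar>"
        unfolding K_def norm_divide norm_minus_cancel by simp
      also have "\<dots> \<le> cmod (\<psi> (n - 1) + \<psi> (n + 1)) / m" using d[of n] m by (intro divide_left_mono) auto
      finally show "cmod (K \<psi> n) \<le> 1/m * cmod (\<psi> (n - 1) + \<psi> (n + 1))" by simp
    qed
    thus ?thesis by simp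
  qed
  have linK: "lin_on K" unfolding lin_on_def K_def by (auto simp: fun_eq_iff divide_inverse algebra_simps)
  obtain \<psi> where \<psi>: "\<psi> \<in> l2" "(\<lambda>n. \<psi> n - K \<psi> n) = \<phi>'" "l2norm \<psi> \<le> l2norm \<phi>' / (1 - 2/m)"
    using neumann[OF linK _ _ _ nb_l2(1)[OF \<phi>'nb], of "2/m"] m Knb[OF l2_nb] nb_l2 by force
  show "\<exists>\<psi>\<in>l2. Top V z \<psi> = \<phi> \<and> l2norm \<psi> \<le> (1/m / (1 - 2/m)) * l2norm \<phi>"
  proof (intro bexI conjI)
    show "Top V z \<psi> = \<phi>"
    proof
      fix n
      have "\<psi> n - K \<psi> n = \<phi>' n" using \<psi>(2) by metis
      thus "Top V z \<psi> n = \<phi> n" using nz[of n] unfolding Top_eq K_def \<phi>'_def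
        by (simp add: field_simps)
    qed
    have "l2norm \<phi>' \<le> (1/m) * l2norm \<phi>" using nb_l2(2)[OF \<phi>'nb] .
    hence "l2norm \<phi>' / (1 - 2/m) \<le> (1/m) * l2norm \<phi> / (1 - 2/m)" using m by (intro divide_right_mono) auto
    thus "l2norm \<psi> \<le> (1/m / (1 - 2/m)) * l2norm \<phi>" using \<psi>(3) by simp
  qed (fact)
qed

lemma inv_obtain:
  assumes "l2_invertible T"
  obtains Bi C where "C > 0" "\<And>\<psi>. \<psi> \<in> l2 \<Longrightarrow> Bi \<psi> \<in> l2" "\<And>\<psi>. \<psi> \<in> l2 \<Longrightarrow> l2norm (Bi \<psi>) \<le> C * l2norm \<psi>"
    "\<And>\<psi>. \<psi> \<in> l2 \<Longrightarrow> Bi (T \<psi>) = \<psi>" "\<And>\<psi>. \<psi> \<in> l2 \<Longrightarrow> T (Bi \<psi>) = \<psi>"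
proof -
  obtain Bi C where h: "\<forall>\<psi>\<in>l2. Bi \<psi> \<in> l2" "\<forall>\<psi>\<in>l2. l2norm (Bi \<psi>) \<le> C * l2norm \<psi>"
    "\<forall>\<psi>\<in>l2. Bi (T \<psi>) = \<psi> \<and> T (Bi \<psi>) = \<psi>"
    using assms unfolding l2_invertible_def by blast
  have "l2norm (Bi \<psi>) \<le> (\<bar>C\<bar> + 1) * l2norm \<psi>" if "\<psi> \<in> l2" for \<psi>
  proof -
    have "C * l2norm \<psi> \<le> (\<bar>C\<bar> + 1) * l2norm \<psi>" using l2norm_nonneg[of \<psi>] by (intro mult_right_mono) auto
    thus ?thesis using h(2) that by force
  qed
  thus ?thesis using that[of "\<bar>C\<bar> + 1" Bi] h by auto
qed

lemma l2norm_scale_le: assumes "\<psi> \<in> l2" shows "l2norm (\<lambda>n. c * \<psi> n) \<le> cmod c * l2norm \<psi>"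
  using nb_l2(2)[OF nb_scale[OF l2_nb[OF assms]]] .

lemma l2norm_zero_le: assumes "\<psi> \<in> l2" "l2norm \<psi> \<le> a * l2norm \<psi>" "a < 1" shows "\<psi> = (\<lambda>n. 0)"
proof -
  have "(1 - a) * l2norm \<psi> \<le> 0" using assms(2) by (simp add: algebra_simps)
  hence "l2norm \<psi> \<le> 0" using assms(3) by (simp add: mult_le_0_iff)
  thus ?thesis using l2_zero_iff[OF assms(1)] l2norm_nonneg[of \<psi>] by simp
qed

lemma inv_near:
  assumes B: "\<And>n. \<bar>V n\<bar> \<le> B" and inv: "l2_invertible (Top V z0)"
  shows "\<exists>e>0. \<forall>z. \<bar>z - z0\<bar> < e \<longrightarrow> l2_invertible (Top V z)"
proof -
  obtain Bi C where C: "C > 0" and Bl: "\<And>\<psi>. \<psi> \<in> l2 \<Longrightarrow> Bi \<psi> \<in> l2"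
    and Bn: "\<And>\<psi>. \<psi> \<in> l2 \<Longrightarrow> l2norm (Bi \<psi>) \<le> C * l2norm \<psi>"
    and BT: "\<And>\<psi>. \<psi> \<in> l2 \<Longrightarrow> Bi (Top V z0 \<psi>) = \<psi>" and TB: "\<And>\<psi>. \<psi> \<in> l2 \<Longrightarrow> Top V z0 (Bi \<psi>) = \<psi>"
    using inv_obtain[OF inv] by metis
  have linB: "lin_on Bi" unfolding lin_on_def
  proof (intro ballI allI)
    fix a b :: "int \<Rightarrow> complex" and c assume a: "a \<in> l2" and b: "b \<in> l2"
    have r: "(\<lambda>n. Bi a n + c * Bi b n) \<in> l2" using l2_lc[OF Bl[OF a] Bl[OF b]] .
    have "Top V z0 (\<lambda>n. Bi a n + c * Bi b n) = (\<lambda>n. a n + c * b n)"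
      using lin_on_def[THEN iffD1, OF lin_Top, rule_format, OF Bl[OF a] Bl[OF b], of V z0 c] TB[OF a] TB[OF b]
      by simp
    hence "Bi (\<lambda>n. a n + c * b n) = (\<lambda>n. Bi a n + c * Bi b n)" using BT[OF r] by simp
    thus "Bi (\<lambda>n. a n + c * b n) = (\<lambda>n. Bi a n + c * Bi b n)" .
  qed
  define e where "e = 1 / (2 * C)"
  have e0: "e > 0" using C by (simp add: e_def)
  show ?thesis
  proof (intro exI[where x=e] conjI e0 allI impI)
    fix z assume zz: "\<bar>z - z0\<bar> < e"
    define w where "w = z - z0"
    have wC: "\<bar>w\<bar> * C \<le> 1/2" using zz C unfolding w_def e_def by (simp add: field_simps)
    have Tz: "Top V z \<psi> = (\<lambda>n. Top V z0 \<psi> n - complex_of_real w * \<psi> n)" for \<psi>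
      unfolding w_def by (auto simp: fun_eq_iff Top_eq algebra_simps)
    show "l2_invertible (Top V z)"
    proof (rule inv_intro[OF lin_Top])
      fix \<psi> :: "int \<Rightarrow> complex" assume "\<psi> \<in> l2" thus "Top V z \<psi> \<in> l2" by (rule Top_l2(1)[OF B])
    next
      fix u :: "int \<Rightarrow> complex" assume u: "u \<in> l2" and Tu: "Top V z u = (\<lambda>n. 0)"
      have "Top V z0 u = (\<lambda>n. complex_of_real w * u n)" using Tu unfolding Tz by (simp add: fun_eq_iff)
      hence "u = Bi (\<lambda>n. complex_of_real w * u n)" using BT[OF u] by simp
      also have "\<dots> = (\<lambda>n. complex_of_real w * Bi u n)" by (rule lin_scale[OF linB u])
      finally have ueq: "u = (\<lambda>n. complex_of_real w * Bi u n)" .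
      have "l2norm u \<le> \<bar>w\<bar> * l2norm (Bi u)"
        using l2norm_scale_le[OF Bl[OF u], of "complex_of_real w"] ueq by simp
      also have "\<dots> \<le> \<bar>w\<bar> * (C * l2norm u)" using Bn[OF u] by (intro mult_left_mono) auto
      also have "\<dots> = (\<bar>w\<bar> * C) * l2norm u" by simp
      finally show "u = (\<lambda>n. 0)" using l2norm_zero_le[OF u] wC by simp
    next
      fix \<phi> :: "int \<Rightarrow> complex" assume \<phi>: "\<phi> \<in> l2"
      define K where "K x = (\<lambda>n. complex_of_real w * Bi x n)" for x
      have linK: "lin_on K" unfolding lin_on_def K_def
        using linB unfolding lin_on_def by (auto simp: fun_eq_iff algebra_simps)
      have Kb: "K x \<in> l2 \<and> l2norm (K x) \<le> (\<bar>w\<bar> * C) * l2norm x" if "x \<in> l2" for x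
      proof
        show "K x \<in> l2" unfolding K_def using l2_scale[OF Bl[OF that]] .
        have "l2norm (K x) \<le> \<bar>w\<bar> * l2norm (Bi x)"
          unfolding K_def using l2norm_scale_le[OF Bl[OF that], of "complex_of_real w"] by simp
        also have "\<dots> \<le> \<bar>w\<bar> * (C * l2norm x)" using Bn[OF that] by (intro mult_left_mono) auto
        finally show "l2norm (K x) \<le> (\<bar>w\<bar> * C) * l2norm x" by simp
      qed
      obtain x where x: "x \<in> l2" "(\<lambda>n. x n - K x n) = \<phi>" "l2norm x \<le> l2norm \<phi> / (1 - \<bar>w\<bar> * C)"
        using neumann[OF linK _ _ Kb \<phi>] wC C by fastforce
      show "\<exists>\<psi>\<in>l2. Top V z \<psi> = \<phi> \<and> l2norm \<psi> \<le> (2 * C) * l2norm \<phi>"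
      proof (intro bexI conjI)
        show "Top V z (Bi x) = \<phi>" unfolding Tz TB[OF x(1)] using x(2) unfolding K_def by simp
        have d: "1 / (1 - \<bar>w\<bar> * C) \<le> 2" using wC by (simp add: field_simps)
        have "l2norm \<phi> / (1 - \<bar>w\<bar> * C) = l2norm \<phi> * (1 / (1 - \<bar>w\<bar> * C))" by simp
        also have "\<dots> \<le> l2norm \<phi> * 2" by (rule mult_left_mono[OF d l2norm_nonneg])
        finally have "l2norm \<phi> / (1 - \<bar>w\<bar> * C) \<le> 2 * l2norm \<phi>" by simp
        hence "l2norm x \<le> 2 * l2norm \<phi>" using x(3) by linarith
        hence "C * l2norm x \<le> C * (2 * l2norm \<phi>)" using C by (intro mult_left_mono) auto
        thus "l2norm (Bi x) \<le> (2 * C) * l2norm \<phi>" using Bn[OF x(1)] by simp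
        show "Bi x \<in> l2" by (rule Bl[OF x(1)])
      qed
    qed
  qed
qed

lemma Sp_closed: assumes B: "\<And>n. \<bar>V n\<bar> \<le> B" shows "closed (Sp V)"
  unfolding closed_def open_dist
proof (intro ballI)
  fix z0 assume "z0 \<in> - Sp V"
  hence "l2_invertible (Top V z0)" unfolding Sp_Top by simp
  then obtain e where "e > 0" "\<forall>z. \<bar>z - z0\<bar> < e \<longrightarrow> l2_invertible (Top V z)" using inv_near[where V=V, OF B] by blast
  thus "\<exists>e>0. \<forall>y. dist y z0 < e \<longrightarrow> y \<in> - Sp V" unfolding Sp_Top dist_real_def by auto
qed

lemma weyl:
  assumes ap: "\<And>\<eta>. \<eta> > 0 \<Longrightarrow> \<exists>\<psi>\<in>l2. \<psi> \<noteq> (\<lambda>n. 0) \<and> Top V z \<psi> \<in> l2 \<and> l2norm (Top V z \<psi>) \<le> \<eta> * l2norm \<psi>"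
  shows "z \<in> Sp V"
proof -
  have "\<not> l2_invertible (Top V z)"
  proof
    assume "l2_invertible (Top V z)"
    then obtain Bi C where C: "C > 0" and Bn: "\<And>\<psi>. \<psi> \<in> l2 \<Longrightarrow> l2norm (Bi \<psi>) \<le> C * l2norm \<psi>"
      and BT: "\<And>\<psi>. \<psi> \<in> l2 \<Longrightarrow> Bi (Top V z \<psi>) = \<psi>" using inv_obtain by metis
    obtain \<psi> where \<psi>: "\<psi> \<in> l2" "\<psi> \<noteq> (\<lambda>n. 0)" "Top V z \<psi> \<in> l2"
      "l2norm (Top V z \<psi>) \<le> 1 / (2 * C) * l2norm \<psi>" using ap[of "1 / (2 * C)"] C by auto
    have "l2norm \<psi> \<le> C * l2norm (Top V z \<psi>)" using Bn[OF \<psi>(3)] BT[OF \<psi>(1)] by simp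
    also have "\<dots> \<le> C * (1 / (2 * C) * l2norm \<psi>)" using \<psi>(4) C by (intro mult_left_mono) auto
    also have "\<dots> = (1/2) * l2norm \<psi>" using C by simp
    finally have "l2norm \<psi> \<le> (1/2) * l2norm \<psi>" .
    hence "\<psi> = (\<lambda>n. 0)" by (rule l2norm_zero_le[OF \<psi>(1)]) simp
    thus False using \<psi>(2) by simp
  qed
  thus ?thesis unfolding Sp_Top by simp
qed

definition rip :: "(int \<Rightarrow> complex) \<Rightarrow> (int \<Rightarrow> complex) \<Rightarrow> real" where
  "rip a b = infsum (\<lambda>n. Re (a n * cnj (b n))) UNIV"

lemma sq_summable: "a \<in> l2 \<Longrightarrow> (\<lambda>n. (cmod (a n))\<^sup>2) summable_on UNIV"
  unfolding l2_def by simp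

lemma rip_summable: assumes "a \<in> l2" "b \<in> l2" shows "(\<lambda>n. Re (a n * cnj (b n))) summable_on UNIV"
proof (rule abs_summable_summable)
  have s: "(\<lambda>n. (cmod (a n))\<^sup>2 + (cmod (b n))\<^sup>2) summable_on UNIV"
    by (rule summable_on_add[OF sq_summable[OF assms(1)] sq_summable[OF assms(2)]])
  show "(\<lambda>n. norm (Re (a n * cnj (b n)))) summable_on UNIV"
  proof (rule summable_on_comparison_test[OF s])
    fix n
    have "norm (Re (a n * cnj (b n))) \<le> cmod (a n * cnj (b n))" by (metis abs_Re_le_cmod real_norm_def)
    also have "\<dots> = cmod (a n) * cmod (b n)" by (simp add: norm_mult)
    also have "\<dots> \<le> (cmod (a n))\<^sup>2 + (cmod (b n))\<^sup>2"
      using sum_squares_ge_zero[of "cmod (a n) - cmod (b n)" 0]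
      by (simp add: power2_eq_square algebra_simps) (smt (verit) mult_nonneg_nonneg norm_ge_zero)
    finally show "norm (Re (a n * cnj (b n))) \<le> (cmod (a n))\<^sup>2 + (cmod (b n))\<^sup>2" .
  qed auto
qed

lemma nsq: assumes "a \<in> l2" shows "(l2norm a)\<^sup>2 = infsum (\<lambda>n. (cmod (a n))\<^sup>2) UNIV"
  unfolding l2norm_def by (simp add: infsum_nonneg)

lemma rip_self: assumes "a \<in> l2" shows "rip a a = (l2norm a)\<^sup>2"
  unfolding nsq[OF assms] rip_def
  by (rule infsum_cong) (simp add: complex_mult_cnj cmod_power2)

lemma rip_sym: "rip a b = rip b a"
  unfolding rip_def by (rule infsum_cong) (simp add: algebra_simps)

lemma rip_add_left: assumes "a1 \<in> l2" "a2 \<in> l2" "b \<in> l2"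
  shows "rip (\<lambda>n. a1 n + a2 n) b = rip a1 b + rip a2 b"
  unfolding rip_def
  using infsum_add[OF rip_summable[OF assms(1,3)] rip_summable[OF assms(2,3)]]
  by (simp add: algebra_simps)

lemma rip_scale_left: assumes "a \<in> l2" "b \<in> l2"
  shows "rip (\<lambda>n. complex_of_real c * a n) b = c * rip a b"
  unfolding rip_def
  using infsum_cmult_right[OF rip_summable[OF assms], of c]
  by (simp add: algebra_simps)

lemma rip_shift: "rip (\<lambda>n. a (n + k)) b = rip a (\<lambda>n. b (n - k))"
proof -
  have bij: "bij_betw (\<lambda>n::int. n + k) UNIV UNIV"
    by (rule bij_betwI[where g="\<lambda>n. n - k"]) auto
  show ?thesis unfolding rip_def
    using infsum_reindex_bij_betw[OF bij, of "\<lambda>m. Re (a m * cnj (b (m - k)))"] by simp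
qed

lemma rip_shift': "rip (\<lambda>n. a (n - k)) b = rip a (\<lambda>n. b (n + k))"
  using rip_shift[of a "-k" b] by simp

lemma rip_weight: "rip (\<lambda>n. complex_of_real (w n) * a n) b = rip a (\<lambda>n. complex_of_real (w n) * b n)"
  unfolding rip_def by (rule infsum_cong) (simp add: algebra_simps)

lemma expand_sq: assumes "a \<in> l2" "b \<in> l2"
  shows "(l2norm (\<lambda>n. a n + complex_of_real t * b n))\<^sup>2 = (l2norm a)\<^sup>2 + 2 * t * rip a b + t\<^sup>2 * (l2norm b)\<^sup>2"
proof -
  have ab: "(\<lambda>n. a n + complex_of_real t * b n) \<in> l2" by (rule l2_lc[OF assms])
  have pt: "(cmod (a n + complex_of_real t * b n))\<^sup>2 = (cmod (a n))\<^sup>2 + (2 * t * Re (a n * cnj (b n)) + t\<^sup>2 * (cmod (b n))\<^sup>2)" for n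
    by (simp only: cmod_power2) (simp add: power2_eq_square algebra_simps)
  have s1: "(\<lambda>n. 2 * t * Re (a n * cnj (b n))) summable_on UNIV"
    using summable_on_cmult_right[OF rip_summable[OF assms]] by simp
  have s2: "(\<lambda>n. t\<^sup>2 * (cmod (b n))\<^sup>2) summable_on UNIV"
    using summable_on_cmult_right[OF sq_summable[OF assms(2)]] by simp
  have "(l2norm (\<lambda>n. a n + complex_of_real t * b n))\<^sup>2
      = infsum (\<lambda>n. (cmod (a n))\<^sup>2 + (2 * t * Re (a n * cnj (b n)) + t\<^sup>2 * (cmod (b n))\<^sup>2)) UNIV"
    unfolding nsq[OF ab] pt ..
  also have "\<dots> = infsum (\<lambda>n. (cmod (a n))\<^sup>2) UNIV + (infsum (\<lambda>n. 2 * t * Re (a n * cnj (b n))) UNIV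
                  + infsum (\<lambda>n. t\<^sup>2 * (cmod (b n))\<^sup>2) UNIV)"
    by (simp only: infsum_add[OF sq_summable[OF assms(1)] summable_on_add[OF s1 s2]] infsum_add[OF s1 s2])
  also have "\<dots> = (l2norm a)\<^sup>2 + 2 * t * rip a b + t\<^sup>2 * (l2norm b)\<^sup>2"
    unfolding nsq[OF assms(1)] nsq[OF assms(2)] rip_def
    by (simp only: infsum_cmult_right[OF rip_summable[OF assms], of "2*t"]
        infsum_cmult_right[OF sq_summable[OF assms(2)], of "t\<^sup>2"] add.assoc)
  finally show ?thesis .
qed

lemma Top_split: "Top V z a = (\<lambda>n. a (n + -1) + a (n + 1) + complex_of_real (V n - z) * a n)"
  by (simp add: fun_eq_iff Top_eq)

lemma rip_Top: assumes B: "\<And>n. \<bar>V n\<bar> \<le> B" and a: "a \<in> l2" and b: "b \<in> l2"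
  shows "rip (Top V z a) b = rip a (Top V z b)"
proof -
  have w: "(\<lambda>n. complex_of_real (V n - z) * f n) \<in> l2" if "f \<in> l2" for f
  proof -
    have "nb (\<lambda>n. complex_of_real (V n - z) * f n) ((B + \<bar>z\<bar>) * l2norm f)"
    proof (rule nb_dom[OF l2_nb[OF that]])
      show "0 \<le> B + \<bar>z\<bar>" using B[of 0] by simp
      fix n
      have "\<bar>V n - z\<bar> \<le> B + \<bar>z\<bar>" using B[of n] by simp
      thus "cmod (complex_of_real (V n - z) * f n) \<le> (B + \<bar>z\<bar>) * cmod (f n)"
        by (simp add: norm_mult mult_right_mono)
    qed
    thus ?thesis using nb_l2 by blast
  qed
  have sa1: "(\<lambda>n. a (n - 1)) \<in> l2" "(\<lambda>n. a (n + 1)) \<in> l2"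
    using l2_shift[OF a, of "-1"] l2_shift[OF a, of 1] by simp_all
  have sb1: "(\<lambda>n. b (n - 1)) \<in> l2" "(\<lambda>n. b (n + 1)) \<in> l2"
    using l2_shift[OF b, of "-1"] l2_shift[OF b, of 1] by simp_all
  have "rip (Top V z a) b = rip (\<lambda>n. a (n - 1) + a (n + 1)) b + rip (\<lambda>n. complex_of_real (V n - z) * a n) b"
    unfolding Top_eq[abs_def] by (rule rip_add_left[OF l2_add[OF sa1] w[OF a] b])
  also have "rip (\<lambda>n. a (n - 1) + a (n + 1)) b = rip (\<lambda>n. a (n - 1)) b + rip (\<lambda>n. a (n + 1)) b"
    by (rule rip_add_left[OF sa1 b])
  also have "rip (\<lambda>n. a (n - 1)) b = rip a (\<lambda>n. b (n + 1))" by (rule rip_shift')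
  also have "rip (\<lambda>n. a (n + 1)) b = rip a (\<lambda>n. b (n - 1))" by (rule rip_shift)
  also have "rip (\<lambda>n. complex_of_real (V n - z) * a n) b = rip a (\<lambda>n. complex_of_real (V n - z) * b n)"
    by (rule rip_weight)
  also have "rip a (\<lambda>n. b (n + 1)) + rip a (\<lambda>n. b (n - 1)) + rip a (\<lambda>n. complex_of_real (V n - z) * b n)
     = rip (\<lambda>n. b (n - 1)) a + rip (\<lambda>n. b (n + 1)) a + rip (\<lambda>n. complex_of_real (V n - z) * b n) a"
    by (simp add: rip_sym)
  also have "rip (\<lambda>n. b (n - 1)) a + rip (\<lambda>n. b (n + 1)) a = rip (\<lambda>n. b (n - 1) + b (n + 1)) a"
    by (rule rip_add_left[OF sb1 a, symmetric])
  also have "rip (\<lambda>n. b (n - 1) + b (n + 1)) a + rip (\<lambda>n. complex_of_real (V n - z) * b n) a = rip (Top V z b) a"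
    unfolding Top_eq[abs_def] by (rule rip_add_left[OF l2_add[OF sb1] w[OF b] a, symmetric])
  also have "\<dots> = rip a (Top V z b)" by (rule rip_sym)
  finally show ?thesis .
qed

lemma l2_pos: "\<psi> \<in> l2 \<Longrightarrow> \<psi> \<noteq> (\<lambda>n. 0) \<Longrightarrow> l2norm \<psi> > 0"
  using l2_zero_iff l2norm_nonneg by (metis less_eq_real_def)

lemma Top_shift_E: "Top V (E + d) x = (\<lambda>n. Top V E x n - complex_of_real d * x n)"
  by (auto simp: fun_eq_iff Top_eq algebra_simps)

lemma weyl_dist:
  assumes B: "\<And>n. \<bar>V n\<bar> \<le> B" and p0: "\<psi>0 \<in> l2" "\<psi>0 \<noteq> (\<lambda>n. 0)"
    and r0: "l2norm (Top V E \<psi>0) \<le> \<eta> * l2norm \<psi>0"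
  shows "\<exists>w\<in>Sp V. \<bar>w - E\<bar> \<le> \<eta>"
proof -
  define S where "S = Top V E"
  define s0 where "s0 = 2 + B + \<bar>E\<bar>"
  have B0: "0 \<le> B" using B[of 0] by simp
  have s0pos: "s0 > 0" unfolding s0_def using B0 by simp
  have Sl2: "S \<psi> \<in> l2" if "\<psi> \<in> l2" for \<psi> unfolding S_def by (rule Top_l2(1)[OF B that])
  have Sb: "l2norm (S \<psi>) \<le> s0 * l2norm \<psi>" if "\<psi> \<in> l2" for \<psi> unfolding S_def s0_def by (rule Top_l2(2)[OF B that])
  have linS: "S (\<lambda>n. a n + c * b n) = (\<lambda>n. S a n + c * S b n)" if "a \<in> l2" "b \<in> l2" for a b c
    using lin_Top[of V E] that unfolding lin_on_def S_def by blast
  define R where "R = {l2norm (S \<psi>) / l2norm \<psi> | \<psi>. \<psi> \<in> l2 \<and> \<psi> \<noteq> (\<lambda>n. 0)}"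
  have Rne: "R \<noteq> {}" unfolding R_def using p0 by blast
  have R0: "\<forall>x\<in>R. 0 \<le> x" unfolding R_def by (auto intro!: divide_nonneg_nonneg l2norm_nonneg)
  have Rbdd: "bdd_below R" using R0 by (auto intro: bdd_belowI)
  define c where "c = Inf R"
  have c0: "0 \<le> c" unfolding c_def using Rne R0 by (intro cInf_greatest) auto
  have ratio_ge: "c \<le> l2norm (S \<psi>) / l2norm \<psi>" if "\<psi> \<in> l2" "\<psi> \<noteq> (\<lambda>n. 0)" for \<psi>
    unfolding c_def by (rule cInf_lower[OF _ Rbdd]) (use that in \<open>auto simp: R_def\<close>)
  have c\<eta>: "c \<le> \<eta>"
  proof -
    have "c \<le> l2norm (S \<psi>0) / l2norm \<psi>0" by (rule ratio_ge[OF p0])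
    also have "\<dots> \<le> \<eta>" using r0 l2_pos[OF p0] unfolding S_def by (simp add: divide_le_eq)
    finally show ?thesis .
  qed
  have lowb: "c * l2norm \<psi> \<le> l2norm (S \<psi>)" if "\<psi> \<in> l2" for \<psi>
  proof (cases "\<psi> = (\<lambda>n. 0)")
    case True thus ?thesis using l2norm_nonneg[of "S \<psi>"] l2_zero_iff[OF that] by simp
  next
    case False thus ?thesis using ratio_ge[OF that False] l2_pos[OF that False] by (simp add: le_divide_eq)
  qed
  have near: "\<exists>\<psi>\<in>l2. \<psi> \<noteq> (\<lambda>n. 0) \<and> l2norm (S \<psi>) \<le> (c + h) * l2norm \<psi>" if "h > 0" for h
  proof -
    have "Inf R < c + h" using that unfolding c_def by simp
    then obtain x where "x \<in> R" "x < c + h" using cInf_less_iff[OF Rne Rbdd] by blast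
    then obtain \<psi> where \<psi>: "\<psi> \<in> l2" "\<psi> \<noteq> (\<lambda>n. 0)" "l2norm (S \<psi>) / l2norm \<psi> < c + h" unfolding R_def by blast
    hence "l2norm (S \<psi>) \<le> (c + h) * l2norm \<psi>" using l2_pos[OF \<psi>(1,2)] by (simp add: divide_less_eq)
    thus ?thesis using \<psi> by blast
  qed
  show ?thesis
  proof (cases "c = 0")
    case True
    have "E \<in> Sp V"
    proof (rule weyl)
      fix \<eta>' :: real assume "\<eta>' > 0"
      then obtain \<psi> where "\<psi> \<in> l2" "\<psi> \<noteq> (\<lambda>n. 0)" "l2norm (S \<psi>) \<le> \<eta>' * l2norm \<psi>"
        using near[of \<eta>'] True by auto
      thus "\<exists>\<psi>\<in>l2. \<psi> \<noteq> (\<lambda>n. 0) \<and> Top V E \<psi> \<in> l2 \<and> l2norm (Top V E \<psi>) \<le> \<eta>' * l2norm \<psi>"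
        using Sl2 unfolding S_def by blast
    qed
    thus ?thesis using c\<eta> c0 by force
  next
    case False
    hence cpos: "c > 0" using c0 by simp
    define P1 where "P1 \<eta>' \<longleftrightarrow> (\<exists>\<phi>\<in>l2. \<phi> \<noteq> (\<lambda>n. 0) \<and> Top V (E + c) \<phi> \<in> l2 \<and> l2norm (Top V (E + c) \<phi>) \<le> \<eta>' * l2norm \<phi>)" for \<eta>'
    define P2 where "P2 \<eta>' \<longleftrightarrow> (\<exists>\<phi>\<in>l2. \<phi> \<noteq> (\<lambda>n. 0) \<and> Top V (E + - c) \<phi> \<in> l2 \<and> l2norm (Top V (E + - c) \<phi>) \<le> \<eta>' * l2norm \<phi>)" for \<eta>'
    have claim: "P1 \<eta>' \<or> P2 \<eta>'" if \<eta>'pos: "\<eta>' > 0" for \<eta>'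
    proof -
      define h where "h = min 1 ((\<eta>' * c)\<^sup>2 / (s0\<^sup>2 * (2 * c + 1)))"
      have hpos: "h > 0" unfolding h_def using \<eta>'pos cpos s0pos by simp
      have h1: "h \<le> 1" unfolding h_def by simp
      have hb: "s0\<^sup>2 * (2 * c + 1) * h \<le> (\<eta>' * c)\<^sup>2"
      proof -
        have "h \<le> (\<eta>' * c)\<^sup>2 / (s0\<^sup>2 * (2 * c + 1))" unfolding h_def by simp
        thus ?thesis using s0pos cpos by (simp add: le_divide_eq mult.commute)
      qed
      obtain \<psi> where \<psi>: "\<psi> \<in> l2" "\<psi> \<noteq> (\<lambda>n. 0)" "l2norm (S \<psi>) \<le> (c + h) * l2norm \<psi>"
        using near[OF hpos] by blast
      define N where "N = l2norm \<psi>"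
      have Npos: "N > 0" unfolding N_def using l2_pos[OF \<psi>(1,2)] .
      have S\<psi>: "S \<psi> \<in> l2" by (rule Sl2[OF \<psi>(1)])
      have SS\<psi>: "S (S \<psi>) \<in> l2" by (rule Sl2[OF S\<psi>])
      define \<phi> where "\<phi> = (\<lambda>n. S (S \<psi>) n + complex_of_real (- (c\<^sup>2)) * \<psi> n)"
      have \<phi>l2: "\<phi> \<in> l2" unfolding \<phi>_def by (rule l2_lc[OF SS\<psi> \<psi>(1)])
      have \<tau>: "(l2norm (S \<psi>))\<^sup>2 - c\<^sup>2 * N\<^sup>2 \<le> (2 * c + 1) * h * N\<^sup>2"
      proof -
        have "(l2norm (S \<psi>))\<^sup>2 \<le> ((c + h) * N)\<^sup>2"
          using \<psi>(3) l2norm_nonneg[of "S \<psi>"] unfolding N_def by (intro power_mono) auto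
        moreover have "h\<^sup>2 \<le> h" using hpos h1 by (simp add: power2_eq_square mult_le_cancel_left1)
        ultimately have a: "(l2norm (S \<psi>))\<^sup>2 - c\<^sup>2 * N\<^sup>2 \<le> (2 * c * h + h\<^sup>2) * N\<^sup>2"
          by (simp add: power_mult_distrib power2_eq_square algebra_simps)
        have "2 * c * h + h\<^sup>2 \<le> (2 * c + 1) * h" using \<open>h\<^sup>2 \<le> h\<close> by (simp add: algebra_simps)
        hence "(2 * c * h + h\<^sup>2) * N\<^sup>2 \<le> (2 * c + 1) * h * N\<^sup>2" by (intro mult_right_mono) auto
        thus ?thesis using a by linarith
      qed
      have key: "(l2norm \<phi>)\<^sup>2 \<le> s0\<^sup>2 * ((l2norm (S \<psi>))\<^sup>2 - c\<^sup>2 * N\<^sup>2)"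
      proof -
        define t where "t = - 1 / s0\<^sup>2"
        define u where "u = (\<lambda>n. \<psi> n + complex_of_real t * \<phi> n)"
        have ul2: "u \<in> l2" unfolding u_def by (rule l2_lc[OF \<psi>(1) \<phi>l2])
        have S\<phi>: "S \<phi> \<in> l2" by (rule Sl2[OF \<phi>l2])
        have Su: "S u = (\<lambda>n. S \<psi> n + complex_of_real t * S \<phi> n)" unfolding u_def by (rule linS[OF \<psi>(1) \<phi>l2])
        have "(c * l2norm u)\<^sup>2 \<le> (l2norm (S u))\<^sup>2"
          using lowb[OF ul2] cpos l2norm_nonneg[of u] by (intro power_mono) auto
        moreover have e1: "(l2norm u)\<^sup>2 = N\<^sup>2 + 2 * t * rip \<psi> \<phi> + t\<^sup>2 * (l2norm \<phi>)\<^sup>2"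
          unfolding u_def N_def by (rule expand_sq[OF \<psi>(1) \<phi>l2])
        moreover have e2: "(l2norm (S u))\<^sup>2 = (l2norm (S \<psi>))\<^sup>2 + 2 * t * rip (S \<psi>) (S \<phi>) + t\<^sup>2 * (l2norm (S \<phi>))\<^sup>2"
          unfolding Su by (rule expand_sq[OF S\<psi> S\<phi>])
        ultimately have ineq: "c\<^sup>2 * (N\<^sup>2 + 2 * t * rip \<psi> \<phi> + t\<^sup>2 * (l2norm \<phi>)\<^sup>2)
               \<le> (l2norm (S \<psi>))\<^sup>2 + 2 * t * rip (S \<psi>) (S \<phi>) + t\<^sup>2 * (l2norm (S \<phi>))\<^sup>2"
          by (simp add: power_mult_distrib)
        have r1: "rip (S \<psi>) (S \<phi>) = rip (S (S \<psi>)) \<phi>"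
          unfolding S_def by (rule rip_Top[OF B Sl2[OF \<psi>(1), unfolded S_def] \<phi>l2, symmetric])
        have eqSS: "S (S \<psi>) = (\<lambda>n. \<phi> n + complex_of_real (c\<^sup>2) * \<psi> n)" unfolding \<phi>_def by (auto simp: fun_eq_iff)
        have r2: "rip (S (S \<psi>)) \<phi> = (l2norm \<phi>)\<^sup>2 + c\<^sup>2 * rip \<psi> \<phi>"
          unfolding eqSS rip_add_left[OF \<phi>l2 l2_scale[OF \<psi>(1)] \<phi>l2] rip_scale_left[OF \<psi>(1) \<phi>l2]
            rip_self[OF \<phi>l2] ..
        have q: "(l2norm (S \<phi>))\<^sup>2 \<le> s0\<^sup>2 * (l2norm \<phi>)\<^sup>2"
          using Sb[OF \<phi>l2] l2norm_nonneg[of "S \<phi>"] by (metis power_mono power_mult_distrib)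
        define A where "A = (l2norm (S \<psi>))\<^sup>2"
        define P where "P = (l2norm \<phi>)\<^sup>2"
        define Q where "Q = (l2norm (S \<phi>))\<^sup>2"
        define r where "r = rip \<psi> \<phi>"
        have ineq': "c\<^sup>2 * (N\<^sup>2 + 2 * t * r + t\<^sup>2 * P) \<le> A + 2 * t * (P + c\<^sup>2 * r) + t\<^sup>2 * Q"
          using ineq unfolding r1 r2 A_def P_def Q_def r_def .
        have P0: "0 \<le> P" unfolding P_def by simp
        have q': "Q \<le> s0\<^sup>2 * P" using q unfolding Q_def P_def .
        have "0 \<le> (A - c\<^sup>2 * N\<^sup>2) + 2 * t * P + t\<^sup>2 * Q - t\<^sup>2 * c\<^sup>2 * P"
          using ineq' by (simp add: algebra_simps)
        also have "\<dots> \<le> (A - c\<^sup>2 * N\<^sup>2) + 2 * t * P + t\<^sup>2 * (s0\<^sup>2 * P)"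
        proof -
          have "t\<^sup>2 * Q \<le> t\<^sup>2 * (s0\<^sup>2 * P)" using q' by (intro mult_left_mono) auto
          moreover have "0 \<le> t\<^sup>2 * c\<^sup>2 * P" using P0 by simp
          ultimately show ?thesis by linarith
        qed
        also have "t\<^sup>2 * (s0\<^sup>2 * P) = P / s0\<^sup>2" unfolding t_def using s0pos by (simp add: field_simps power2_eq_square)
        also have "2 * t * P = - 2 * P / s0\<^sup>2" unfolding t_def by simp
        finally have "0 \<le> (A - c\<^sup>2 * N\<^sup>2) - P / s0\<^sup>2" by simp
        hence "P / s0\<^sup>2 \<le> A - c\<^sup>2 * N\<^sup>2" by simp
        thus ?thesis unfolding P_def A_def using s0pos by (simp add: divide_le_eq mult.commute)
      qed
      have \<phi>small: "l2norm \<phi> \<le> \<eta>' * c * N"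
      proof -
        have "(l2norm \<phi>)\<^sup>2 \<le> s0\<^sup>2 * ((2 * c + 1) * h * N\<^sup>2)"
          using key mult_left_mono[OF \<tau>, of "s0\<^sup>2"] by simp
        also have "\<dots> = (s0\<^sup>2 * (2 * c + 1) * h) * N\<^sup>2" by simp
        also have "\<dots> \<le> (\<eta>' * c)\<^sup>2 * N\<^sup>2" using hb by (intro mult_right_mono) auto
        also have "\<dots> = (\<eta>' * c * N)\<^sup>2" by (simp add: power_mult_distrib)
        finally have "(l2norm \<phi>)\<^sup>2 \<le> (\<eta>' * c * N)\<^sup>2" .
        thus ?thesis by (rule power2_le_imp_le) (use \<eta>'pos cpos Npos in simp)
      qed
      define r where "r = rip (S \<psi>) \<psi>"
      show ?thesis
      proof (cases "r \<ge> 0")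
        case True
        define \<phi>1 where "\<phi>1 = (\<lambda>n. S \<psi> n + complex_of_real c * \<psi> n)"
        have \<phi>1l2: "\<phi>1 \<in> l2" unfolding \<phi>1_def by (rule l2_lc[OF S\<psi> \<psi>(1)])
        have "(l2norm \<phi>1)\<^sup>2 = (l2norm (S \<psi>))\<^sup>2 + 2 * c * r + c\<^sup>2 * N\<^sup>2"
          unfolding \<phi>1_def r_def N_def by (rule expand_sq[OF S\<psi> \<psi>(1)])
        hence "(c * N)\<^sup>2 \<le> (l2norm \<phi>1)\<^sup>2" using True cpos by (simp add: power_mult_distrib)
        hence ge: "c * N \<le> l2norm \<phi>1" using l2norm_nonneg[of \<phi>1] by (rule power2_le_imp_le)
        have nz: "\<phi>1 \<noteq> (\<lambda>n. 0)" using ge mult_pos_pos[OF cpos Npos] l2_zero_iff[OF \<phi>1l2] by auto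
        have T1: "Top V (E + c) \<phi>1 = \<phi>"
        proof -
          have "S \<phi>1 = (\<lambda>n. S (S \<psi>) n + complex_of_real c * S \<psi> n)" unfolding \<phi>1_def by (rule linS[OF S\<psi> \<psi>(1)])
          thus ?thesis unfolding Top_shift_E S_def[symmetric] \<phi>_def
            by (auto simp: fun_eq_iff \<phi>1_def algebra_simps power2_eq_square)
        qed
        have "l2norm (Top V (E + c) \<phi>1) \<le> \<eta>' * l2norm \<phi>1"
        proof -
          have "\<eta>' * (c * N) \<le> \<eta>' * l2norm \<phi>1" by (rule mult_left_mono[OF ge]) (use \<eta>'pos in simp)
          thus ?thesis unfolding T1 using \<phi>small by (simp add: mult.assoc)
        qed
        hence "P1 \<eta>'" unfolding P1_def using \<phi>1l2 nz T1 \<phi>l2 by auto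
        thus ?thesis by simp
      next
        case False
        define \<phi>2 where "\<phi>2 = (\<lambda>n. S \<psi> n + complex_of_real (- c) * \<psi> n)"
        have \<phi>2l2: "\<phi>2 \<in> l2" unfolding \<phi>2_def by (rule l2_lc[OF S\<psi> \<psi>(1)])
        have ex: "(l2norm \<phi>2)\<^sup>2 = (l2norm (S \<psi>))\<^sup>2 + 2 * (- c) * r + (- c)\<^sup>2 * N\<^sup>2"
          unfolding \<phi>2_def r_def N_def by (rule expand_sq[OF S\<psi> \<psi>(1)])
        have eq: "(l2norm \<phi>2)\<^sup>2 = (l2norm (S \<psi>))\<^sup>2 + (2 * c) * (- r) + (c * N)\<^sup>2"
          unfolding ex by (simp add: power_mult_distrib)
        have "0 \<le> (2 * c) * (- r)" using False cpos by (intro mult_nonneg_nonneg) auto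
        moreover have "0 \<le> (l2norm (S \<psi>))\<^sup>2" by simp
        ultimately have "(c * N)\<^sup>2 \<le> (l2norm \<phi>2)\<^sup>2" unfolding eq by linarith
        hence ge: "c * N \<le> l2norm \<phi>2" using l2norm_nonneg[of \<phi>2] by (rule power2_le_imp_le)
        have nz: "\<phi>2 \<noteq> (\<lambda>n. 0)" using ge mult_pos_pos[OF cpos Npos] l2_zero_iff[OF \<phi>2l2] by auto
        have T2: "Top V (E + - c) \<phi>2 = \<phi>"
        proof -
          have "S \<phi>2 = (\<lambda>n. S (S \<psi>) n + complex_of_real (- c) * S \<psi> n)" unfolding \<phi>2_def by (rule linS[OF S\<psi> \<psi>(1)])
          thus ?thesis unfolding Top_shift_E S_def[symmetric] \<phi>_def
            by (auto simp: fun_eq_iff \<phi>2_def algebra_simps power2_eq_square)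
        qed
        have "l2norm (Top V (E + - c) \<phi>2) \<le> \<eta>' * l2norm \<phi>2"
        proof -
          have "\<eta>' * (c * N) \<le> \<eta>' * l2norm \<phi>2" by (rule mult_left_mono[OF ge]) (use \<eta>'pos in simp)
          thus ?thesis unfolding T2 using \<phi>small by (simp add: mult.assoc)
        qed
        hence "P2 \<eta>'" unfolding P2_def using \<phi>2l2 nz T2 \<phi>l2 by auto
        thus ?thesis by simp
      qed
    qed
    have mono1: "P1 b" if "P1 a" "a \<le> b" for a b
      using that unfolding P1_def by (meson l2norm_nonneg mult_right_mono order_trans)
    have mono2: "P2 b" if "P2 a" "a \<le> b" for a b
      using that unfolding P2_def by (meson l2norm_nonneg mult_right_mono order_trans)
    have "(\<forall>\<eta>'>0. P1 \<eta>') \<or> (\<forall>\<eta>'>0. P2 \<eta>')"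
    proof (rule ccontr)
      assume "\<not> ?thesis"
      then obtain a b where a: "a > 0" "\<not> P1 a" and b: "b > 0" "\<not> P2 b" by auto
      have "P1 (min a b) \<or> P2 (min a b)" using claim a b by simp
      thus False using mono1[of "min a b" a] mono2[of "min a b" b] a b by auto
    qed
    thus ?thesis
    proof
      assume h: "\<forall>\<eta>'>0. P1 \<eta>'"
      have "E + c \<in> Sp V" by (rule weyl) (use h in \<open>auto simp: P1_def\<close>)
      thus ?thesis using c\<eta> c0 by force
    next
      assume h: "\<forall>\<eta>'>0. P2 \<eta>'"
      have "E + - c \<in> Sp V" by (rule weyl) (use h in \<open>auto simp: P2_def\<close>)
      thus ?thesis using c\<eta> c0 by force
    qed
  qed
qed

lemma cis_sum: "cis (x - t) + cis (x + t) = complex_of_real (2 * cos t) * cis x"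
  by (simp add: complex_eq_iff cos_add cos_diff sin_add sin_diff)

lemma l2norm_ge_finite: assumes "\<psi> \<in> l2" "finite F" shows "L2_set (\<lambda>n. cmod (\<psi> n)) F \<le> l2norm \<psi>"
  using l2_nb[OF assms(1)] assms(2) unfolding nb_def by blast

lemma const_stretch_sp:
  assumes B: "\<And>n. \<bar>V n\<bar> \<le> B"
    and st: "\<And>L::nat. \<exists>a. \<forall>n. a \<le> n \<and> n \<le> a + int L \<longrightarrow> V n = c"
    and z: "\<bar>z - c\<bar> \<le> 2"
  shows "z \<in> Sp V"
proof (rule weyl)
  fix \<eta> :: real assume \<eta>: "\<eta> > 0"
  define K0 where "K0 = 2 + B + \<bar>z\<bar>"
  have B0: "0 \<le> B" using B[of 0] by simp
  have K0pos: "K0 > 0" unfolding K0_def using B0 by simp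
  define L where "L = nat \<lceil>(2 * K0 / \<eta>)\<^sup>2\<rceil>"
  obtain a where a: "\<And>n. a \<le> n \<Longrightarrow> n \<le> a + int L \<Longrightarrow> V n = c" using st[of L] by blast
  define \<theta> where "\<theta> = arccos ((z - c) / 2)"
  have cos\<theta>: "2 * cos \<theta> = z - c" unfolding \<theta>_def using z by (subst cos_arccos) auto
  define \<psi> where "\<psi> n = (if a \<le> n \<and> n \<le> a + int L then cis (real_of_int n * \<theta>) else 0)" for n
  have \<psi>b: "cmod (\<psi> n) \<le> 1" for n unfolding \<psi>_def by simp
  have fin: "finite {a..a + int L}" by simp
  have \<psi>nb: "nb \<psi> (sqrt (card {a..a + int L}) * 1)"
    by (rule nb_finsupp[OF fin]) (auto simp: \<psi>_def)
  have \<psi>l2: "\<psi> \<in> l2" using nb_l2[OF \<psi>nb] by blast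
  have \<psi>nz: "\<psi> \<noteq> (\<lambda>n. 0)"
  proof
    assume "\<psi> = (\<lambda>n. 0)" hence "\<psi> a = 0" by simp
    thus False unfolding \<psi>_def by simp
  qed
  have \<psi>norm: "sqrt (real (L + 1)) \<le> l2norm \<psi>"
  proof -
    have "L2_set (\<lambda>n. cmod (\<psi> n)) {a..a + int L} = L2_set (\<lambda>n. 1) {a..a + int L}"
      by (rule L2_set_cong) (auto simp: \<psi>_def)
    also have "\<dots> = sqrt (real (L + 1))" by (simp add: L2_set_constant)
    finally show ?thesis using l2norm_ge_finite[OF \<psi>l2 fin] by simp
  qed
  define S where "S = {a - 1, a, a + int L, a + int L + 1}"
  have Tz: "Top V z \<psi> n = 0" if "n \<notin> S" for n
  proof (cases "a < n \<and> n < a + int L")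
    case True
    have eq: "real_of_int (n - 1) * \<theta> = real_of_int n * \<theta> - \<theta>" "real_of_int (n + 1) * \<theta> = real_of_int n * \<theta> + \<theta>"
      by (simp_all add: algebra_simps)
    have "Top V z \<psi> n = cis (real_of_int n * \<theta> - \<theta>) + cis (real_of_int n * \<theta> + \<theta>) + complex_of_real (c - z) * cis (real_of_int n * \<theta>)"
      unfolding Top_eq using True a[of n] eq by (simp add: \<psi>_def)
    also have "\<dots> = complex_of_real (2 * cos \<theta> + (c - z)) * cis (real_of_int n * \<theta>)"
      unfolding cis_sum by (simp add: distrib_right)
    also have "\<dots> = 0" using cos\<theta> by simp
    finally show ?thesis .
  next
    case False
    hence "n < a - 1 \<or> n > a + int L + 1" using that unfolding S_def by auto
    thus ?thesis unfolding Top_eq \<psi>_def by auto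
  qed
  have Tb: "cmod (Top V z \<psi> n) \<le> K0" for n
  proof -
    have "cmod (Top V z \<psi> n) \<le> cmod (\<psi> (n - 1) + \<psi> (n + 1)) + cmod (complex_of_real (V n - z) * \<psi> n)"
      unfolding Top_eq by (rule norm_triangle_ineq)
    also have "\<dots> \<le> cmod (\<psi> (n - 1)) + cmod (\<psi> (n + 1)) + \<bar>V n - z\<bar> * cmod (\<psi> n)"
      by (simp add: norm_mult norm_triangle_ineq)
    also have "\<dots> \<le> 1 + 1 + (B + \<bar>z\<bar>) * 1"
      using \<psi>b B[of n] by (intro add_mono mult_mono) auto
    finally show ?thesis unfolding K0_def by simp
  qed
  have Tnb: "nb (Top V z \<psi>) (sqrt (card S) * K0)"
    by (rule nb_finsupp) (auto simp: S_def Tz Tb)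
  have cS: "card S \<le> 4" unfolding S_def by (auto simp: card_insert_if)
  have "sqrt (card S) \<le> 2"
  proof -
    have "sqrt (card S) \<le> sqrt 4" using cS by (intro real_sqrt_le_mono) auto
    thus ?thesis by simp
  qed
  hence Tnb2: "nb (Top V z \<psi>) (2 * K0)" using K0pos by (intro nb_mono[OF Tnb]) (simp add: mult_right_mono)
  have "2 * K0 \<le> \<eta> * sqrt (real (L + 1))"
  proof -
    have "(2 * K0 / \<eta>)\<^sup>2 \<le> real (L + 1)" unfolding L_def by linarith
    hence "2 * K0 / \<eta> \<le> sqrt (real (L + 1))" by (simp add: real_le_rsqrt)
    thus ?thesis using \<eta> by (simp add: field_simps)
  qed
  also have "\<dots> \<le> \<eta> * l2norm \<psi>" using \<psi>norm \<eta> by simp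
  finally have "nb (Top V z \<psi>) (\<eta> * l2norm \<psi>)" using nb_mono[OF Tnb2] by blast
  thus "\<exists>\<psi>\<in>l2. \<psi> \<noteq> (\<lambda>n. 0) \<and> Top V z \<psi> \<in> l2 \<and> l2norm (Top V z \<psi>) \<le> \<eta> * l2norm \<psi>"
    using \<psi>l2 \<psi>nz nb_l2 by blast
qed

definition V0 :: "int \<Rightarrow> real" where "V0 n = (if n < 0 then 2 else 4)"

lemma V0_bd: "\<bar>V0 n\<bar> \<le> 4" unfolding V0_def by simp

lemma V0_bounded: "bounded (range V0)"
  unfolding bounded_iff using V0_bd by (auto simp: real_norm_def)

lemma Sp_V0: "Sp V0 = {0..6}"
proof
  show "{0..6} \<subseteq> Sp V0"
  proof
    fix z :: real assume z: "z \<in> {0..6}"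
    show "z \<in> Sp V0"
    proof (cases "z \<le> 4")
      case True
      show ?thesis
      proof (rule const_stretch_sp[where V=V0 and B=4 and c=2, OF V0_bd])
        fix L :: nat
        show "\<exists>a. \<forall>n. a \<le> n \<and> n \<le> a + int L \<longrightarrow> V0 n = 2"
          by (rule exI[where x="- int L - 1"]) (auto simp: V0_def)
      qed (use z True in auto)
    next
      case False
      show ?thesis
      proof (rule const_stretch_sp[where V=V0 and B=4 and c=4, OF V0_bd])
        fix L :: nat
        show "\<exists>a. \<forall>n. a \<le> n \<and> n \<le> a + int L \<longrightarrow> V0 n = 4"
          by (rule exI[where x=0]) (auto simp: V0_def)
      qed (use z False in auto)
    qed
  qed
next
  show "Sp V0 \<subseteq> {0..6}"
  proof
    fix z assume zs: "z \<in> Sp V0"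
    show "z \<in> {0..6}"
    proof (rule ccontr)
      assume nz: "z \<notin> {0..6}"
      define m where "m = min \<bar>2 - z\<bar> \<bar>4 - z\<bar>"
      have m2: "m > 2" unfolding m_def using nz by auto
      have "l2_invertible (Top V0 z)"
        by (rule gersh[where V=V0 and B=4, OF V0_bd m2]) (auto simp: V0_def m_def)
      thus False using zs unfolding Sp_Top by simp
    qed
  qed
qed

definition sfun :: "real \<Rightarrow> real" where "sfun x = sqrt (x\<^sup>2 - 4)"
definition mufun :: "real \<Rightarrow> real" where "mufun x = (sfun x - x) / 2"

lemma four_le_sq: "x \<ge> 2 \<Longrightarrow> 4 \<le> (x::real)\<^sup>2"
  using power_mono[of 2 x 2] by simp

lemma sfun_sq: "x \<ge> 2 \<Longrightarrow> (sfun x)\<^sup>2 = x\<^sup>2 - 4"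
  unfolding sfun_def using four_le_sq[of x] by simp

lemma sfun_nonneg: "x \<ge> 2 \<Longrightarrow> 0 \<le> sfun x" unfolding sfun_def using four_le_sq[of x] by simp

lemma sfun_lt: assumes "x \<ge> 2" shows "sfun x < x"
proof -
  have "(sfun x)\<^sup>2 < x\<^sup>2" using sfun_sq[OF assms] by simp
  thus ?thesis using assms sfun_nonneg[of x] by (smt (verit) power_mono)
qed

lemma mu_quad: "x \<ge> 2 \<Longrightarrow> (mufun x)\<^sup>2 + x * mufun x + 1 = 0"
  unfolding mufun_def using sfun_sq[of x] by (simp add: power2_eq_square field_simps)

lemma mu_lin: "2 * mufun x + x = sfun x"
  unfolding mufun_def by (simp add: field_simps)

lemma mu_prod: assumes "x \<ge> 2" shows "(x - sfun x) * (x + sfun x) = 4"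
  using sfun_sq[OF assms] by (simp add: power2_eq_square algebra_simps)

lemma mu_abs: assumes "x > 2" shows "\<bar>mufun x\<bar> = 2 / (x + sfun x)"
proof -
  have "x - sfun x > 0" using sfun_lt[of x] assms by simp
  moreover have "x + sfun x > 0" using sfun_nonneg[of x] assms by simp
  ultimately show ?thesis using mu_prod[of x] assms unfolding mufun_def
    by (simp add: field_simps abs_if)
qed

lemma mu_abs_le: assumes "x > 2" shows "\<bar>mufun x\<bar> \<le> 2 / x"
proof -
  have "2 / (x + sfun x) \<le> 2 / x" using assms sfun_nonneg[of x] by (intro divide_left_mono) auto
  thus ?thesis using mu_abs[OF assms] by simp
qed

lemma mu_abs_lt1: assumes "x > 2" shows "\<bar>mufun x\<bar> < 1"
  using mu_abs_le[OF assms] assms by (smt (verit) divide_less_eq_1_pos)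

lemma geo_sq_sum:
  fixes \<rho> :: real
  assumes r: "\<bar>\<rho>\<bar> < 1" and F: "finite F"
  shows "(\<Sum>n\<in>F. (\<rho> ^ nat \<bar>n - p\<bar>)\<^sup>2) \<le> 2 / (1 - \<rho>\<^sup>2)"
proof -
  define q where "q = \<rho>\<^sup>2"
  have q0: "0 \<le> q" and q1: "q < 1" unfolding q_def using r by (auto simp: abs_square_less_1)
  have sm: "summable (\<lambda>k. q ^ k)" using q0 q1 by (intro summable_geometric) simp
  have sg: "suminf (\<lambda>k. q ^ k) = 1 / (1 - q)" using q0 q1 by (intro suminf_geometric) simp
  have half: "(\<Sum>n\<in>A. q ^ nat \<bar>n - p\<bar>) \<le> 1 / (1 - q)" if A: "A \<subseteq> F" "inj_on (\<lambda>n. nat \<bar>n - p\<bar>) A" for A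
  proof -
    have fA: "finite A" using F A(1) finite_subset by blast
    have "(\<Sum>n\<in>A. q ^ nat \<bar>n - p\<bar>) = (\<Sum>k\<in>(\<lambda>n. nat \<bar>n - p\<bar>) ` A. q ^ k)"
      by (subst sum.reindex[OF A(2)]) simp
    also have "\<dots> \<le> suminf (\<lambda>k. q ^ k)" by (rule sum_le_suminf[OF sm]) (use fA q0 in auto)
    finally show ?thesis using sg by simp
  qed
  have i1: "inj_on (\<lambda>n. nat \<bar>n - p\<bar>) {n\<in>F. p \<le> n}" by (auto simp: inj_on_def)
  have i2: "inj_on (\<lambda>n. nat \<bar>n - p\<bar>) {n\<in>F. \<not> p \<le> n}" by (auto simp: inj_on_def)
  have pw: "(\<rho> ^ k)\<^sup>2 = q ^ k" for k unfolding q_def by (metis power_mult mult.commute)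
  have "(\<Sum>n\<in>F. (\<rho> ^ nat \<bar>n - p\<bar>)\<^sup>2) = (\<Sum>n\<in>F. q ^ nat \<bar>n - p\<bar>)"
    by (simp only: pw)
  also have "\<dots> = (\<Sum>n\<in>{n\<in>F. p \<le> n} \<union> {n\<in>F. \<not> p \<le> n}. q ^ nat \<bar>n - p\<bar>)"
    by (rule sum.cong) auto
  also have "\<dots> = (\<Sum>n\<in>{n\<in>F. p \<le> n}. q ^ nat \<bar>n - p\<bar>) + (\<Sum>n\<in>{n\<in>F. \<not> p \<le> n}. q ^ nat \<bar>n - p\<bar>)"
    by (rule sum.union_disjoint) (use F in auto)
  also have "\<dots> \<le> 1 / (1 - q) + 1 / (1 - q)" by (intro add_mono half i1 i2) auto
  finally show ?thesis unfolding q_def by simp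
qed

definition Wp :: "nat \<Rightarrow> nat \<Rightarrow> (nat \<Rightarrow> real) \<Rightarrow> int \<Rightarrow> real" where
  "Wp l J E n = (if 0 \<le> n \<and> n mod int l = 0 \<and> n div int l \<le> int J
                 then 4 - sfun (4 - E (nat (n div int l))) else 4)"

definition goodE :: "nat \<Rightarrow> (nat \<Rightarrow> real) \<Rightarrow> bool" where
  "goodE J E \<longleftrightarrow> (\<forall>j\<le>J. 0 \<le> E j \<and> E j < 2)"

lemma sfun_le4: assumes "0 \<le> e" "e < 2" shows "sfun (4 - e) \<le> 4"
proof -
  have ee: "e * e \<le> 2 * e" using assms by (intro mult_right_mono) auto
  have "(4 - e)\<^sup>2 - 4 \<le> 16" using ee assms by (simp add: power2_eq_square algebra_simps)
  hence "sqrt ((4 - e)\<^sup>2 - 4) \<le> sqrt 16" by (rule real_sqrt_le_mono)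
  thus ?thesis unfolding sfun_def by simp
qed

lemma Wp_range: assumes "goodE J E" shows "0 \<le> Wp l J E n" "Wp l J E n \<le> 4"
proof -
  have h: "0 \<le> sfun (4 - E j) \<and> sfun (4 - E j) \<le> 4" if "j \<le> J" for j
    using assms that sfun_nonneg[of "4 - E j"] sfun_le4[of "E j"] unfolding goodE_def by auto
  show "0 \<le> Wp l J E n" "Wp l J E n \<le> 4"
    unfolding Wp_def using h[of "nat (n div int l)"] by (auto simp: nat_le_iff)
qed

lemma Wp_bd: "goodE J E \<Longrightarrow> \<bar>Wp l J E n\<bar> \<le> 4"
  using Wp_range[of J E l n] by simp

lemma Wp_at: assumes "l \<ge> 1" "j \<le> J" shows "Wp l J E (int l * int j) = 4 - sfun (4 - E j)"
  unfolding Wp_def using assms by simp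

lemma Wp_near: assumes "l \<ge> 1" "0 < \<bar>d\<bar>" "\<bar>d\<bar> < int l" shows "Wp l J E (int l * int j + d) = 4"
proof -
  have "(int l * int j + d) mod int l \<noteq> 0"
  proof
    assume "(int l * int j + d) mod int l = 0"
    hence "d mod int l = 0" by (simp add: mod_add_left_eq[symmetric])
    hence "int l dvd d" by (simp add: dvd_eq_mod_eq_0)
    then obtain k where "d = int l * k" by (auto elim: dvdE)
    show False
    proof (cases "k = 0")
      case True thus False using assms \<open>d = int l * k\<close> by simp
    next
      case False
      hence "1 \<le> \<bar>k\<bar>" by simp
      hence "int l * 1 \<le> int l * \<bar>k\<bar>" by (intro mult_left_mono) auto
      moreover have "\<bar>d\<bar> = int l * \<bar>k\<bar>" using \<open>d = int l * k\<close> by (simp add: abs_mult)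
      ultimately show False using assms(3) by simp
    qed
  qed
  thus ?thesis unfolding Wp_def by auto
qed

lemma Wp_neg: "n < 0 \<Longrightarrow> Wp l J E n = 4" unfolding Wp_def by simp

lemma Wp_Sp_upper: assumes g: "goodE J E" and z: "z > 6" shows "z \<notin> Sp (Wp l J E)"
proof -
  have "l2_invertible (Top (Wp l J E) z)"
  proof (rule gersh[where B=4 and m="z - 4", OF Wp_bd[OF g]])
    show "2 < z - 4" using z by simp
    fix n
    have "Wp l J E n \<le> 4" by (rule Wp_range(2)[OF g])
    thus "z - 4 \<le> \<bar>Wp l J E n - z\<bar>" using z by simp
  qed
  thus ?thesis unfolding Sp_Top by simp
qed

lemma Wp_Sp_ess: assumes g: "goodE J E" and z: "2 \<le> z" "z \<le> 6" shows "z \<in> Sp (Wp l J E)"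
proof (rule const_stretch_sp[where B=4 and c=4, OF Wp_bd[OF g]])
  fix L :: nat
  show "\<exists>a. \<forall>n. a \<le> n \<and> n \<le> a + int L \<longrightarrow> Wp l J E n = 4"
    by (rule exI[where x="- int L - 1"]) (auto simp: Wp_neg)
qed (use z in auto)

lemma card4_sqrt: "sqrt (real (card {a, b, c, d :: int})) \<le> 2"
proof -
  have "card {a, b, c, d} \<le> 4" by (auto simp: card_insert_if)
  hence "sqrt (real (card {a, b, c, d})) \<le> sqrt 4" by (intro real_sqrt_le_mono) auto
  thus ?thesis by simp
qed

lemma well_lower:
  assumes g: "goodE J E" and lL: "L + 2 \<le> l" and L1: "1 \<le> L" and j: "j \<le> J"
  shows "\<exists>w\<in>Sp (Wp l J E). \<bar>w - E j\<bar> \<le> 12 * \<bar>mufun (4 - E j)\<bar> ^ (L - 1)"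
proof -
  define x where "x = 4 - E j"
  have Ej: "0 \<le> E j" "E j < 2" using g j unfolding goodE_def by auto
  have x2: "x > 2" "x \<le> 4" unfolding x_def using Ej by auto
  define \<mu> where "\<mu> = mufun x"
  have \<mu>1: "\<bar>\<mu>\<bar> < 1" unfolding \<mu>_def by (rule mu_abs_lt1[OF x2(1)])
  have \<mu>q: "\<mu>\<^sup>2 + x * \<mu> + 1 = 0" unfolding \<mu>_def using mu_quad x2 by simp
  have \<mu>l: "2 * \<mu> + x = sfun x" unfolding \<mu>_def by (rule mu_lin)
  define p where "p = int l * int j"
  define W where "W = Wp l J E"
  have l1: "l \<ge> 1" using lL L1 by simp
  have Wp: "W p = 4 - sfun x" unfolding W_def p_def x_def by (rule Wp_at[OF l1 j])
  have Wn: "W n = 4" if "0 < \<bar>n - p\<bar>" "\<bar>n - p\<bar> \<le> int L" for n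
  proof -
    have "W (int l * int j + (n - p)) = 4" unfolding W_def
      by (rule Wp_near[OF l1]) (use that lL in auto)
    thus ?thesis unfolding p_def by simp
  qed
  define \<psi> where "\<psi> n = (if \<bar>n - p\<bar> \<le> int L then complex_of_real (\<mu> ^ nat \<bar>n - p\<bar>) else 0)" for n
  have \<psi>b: "cmod (\<psi> n) \<le> 1" for n
    unfolding \<psi>_def using \<mu>1 by (auto simp: norm_power intro!: power_le_one)
  have fin: "finite {p - int L..p + int L}" by simp
  have \<psi>nb: "nb \<psi> (sqrt (card {p - int L..p + int L}) * 1)"
    by (rule nb_finsupp[OF fin]) (use \<psi>b in \<open>auto simp: \<psi>_def\<close>)
  have \<psi>l2: "\<psi> \<in> l2" using nb_l2[OF \<psi>nb] by blast
  have \<psi>p: "\<psi> p = 1" unfolding \<psi>_def by simp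
  have \<psi>nz: "\<psi> \<noteq> (\<lambda>n. 0)" using \<psi>p by auto
  have \<psi>norm: "1 \<le> l2norm \<psi>"
    using l2norm_ge_finite[OF \<psi>l2, of "{p}"] \<psi>p unfolding L2_set_def by simp
  have \<psi>small: "cmod (\<psi> m) \<le> \<bar>\<mu>\<bar> ^ (L - 1)" if "int L - 1 \<le> \<bar>m - p\<bar>" for m
  proof (cases "\<bar>m - p\<bar> \<le> int L")
    case True
    have "cmod (\<psi> m) = \<bar>\<mu>\<bar> ^ nat \<bar>m - p\<bar>" using True unfolding \<psi>_def by (simp add: norm_power)
    also have "\<dots> \<le> \<bar>\<mu>\<bar> ^ (L - 1)" using that \<mu>1 by (intro power_decreasing) auto
    finally show ?thesis .
  next
    case False thus ?thesis unfolding \<psi>_def by simp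
  qed
  define S where "S = {p - int L - 1, p - int L, p + int L, p + int L + 1}"
  have zero: "Top W (E j) \<psi> n = 0" if nS: "n \<notin> S" for n
  proof -
    consider "n = p" | "0 < n - p" "n - p < int L" | "n - p < 0" "- int L < n - p" | "\<bar>n - p\<bar> > int L + 1"
    proof -
      have ne: "n \<noteq> p - int L - 1" "n \<noteq> p - int L" "n \<noteq> p + int L" "n \<noteq> p + int L + 1"
        using nS unfolding S_def by auto
      have "n = p \<or> (0 < n - p \<and> n - p < int L) \<or> (n - p < 0 \<and> - int L < n - p) \<or> \<bar>n - p\<bar> > int L + 1"
        using ne by linarith
      thus ?thesis using that by blast
    qed
    thus ?thesis
    proof cases
      case 1
      have "Top W (E j) \<psi> n = complex_of_real (2 * \<mu> + x - sfun x)"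
        unfolding Top_eq 1 Wp using L1 by (simp add: \<psi>_def x_def)
      thus ?thesis using \<mu>l by simp
    next
      case 2
      define k where "k = nat (n - p)"
      have k1: "k \<ge> 1" "int k = n - p" using 2 unfolding k_def by auto
      have i1: "n - 1 - p = int (k - 1)" using k1 by (simp add: of_nat_diff)
      have i2: "n + 1 - p = int (k + 1)" using k1 by simp
      have i3: "n - p = int k" using k1 by simp
      have a11: "nat \<bar>n - 1 - p\<bar> = k - 1" unfolding i1 by simp
      have a12: "\<bar>n - 1 - p\<bar> \<le> int L" using k1 2 by linarith
      have a21: "nat \<bar>n + 1 - p\<bar> = k + 1" unfolding i2 by simp
      have a22: "\<bar>n + 1 - p\<bar> \<le> int L" using k1 2 by linarith
      have a31: "nat \<bar>n - p\<bar> = k" unfolding i3 by simp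
      have a32: "\<bar>n - p\<bar> \<le> int L" using k1 2 by linarith
      have e1: "\<psi> (n - 1) = complex_of_real (\<mu> ^ (k - 1))" using a11 a12 unfolding \<psi>_def by simp
      have e2: "\<psi> (n + 1) = complex_of_real (\<mu> ^ (k + 1))" using a21 a22 unfolding \<psi>_def by simp
      have e3: "\<psi> n = complex_of_real (\<mu> ^ k)" using a31 a32 unfolding \<psi>_def by simp
      have Wn': "W n = 4" using Wn 2 by simp
      have "\<mu> ^ (k - 1) + \<mu> ^ (k + 1) + x * \<mu> ^ k = \<mu> ^ (k - 1) * (\<mu>\<^sup>2 + x * \<mu> + 1)"
      proof -
        obtain m where km: "k = Suc m" using k1 by (cases k) auto
        have "\<mu> ^ (k + 1) = \<mu> ^ (k - 1) * \<mu>\<^sup>2" "\<mu> ^ k = \<mu> ^ (k - 1) * \<mu>"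
          unfolding km by (simp_all add: power2_eq_square mult_ac)
        thus ?thesis by (simp add: algebra_simps)
      qed
      hence "\<mu> ^ (k - 1) + \<mu> ^ (k + 1) + x * \<mu> ^ k = 0" using \<mu>q by simp
      thus ?thesis unfolding Top_eq e1 e2 e3 Wn' x_def
        by (metis (no_types, lifting) of_real_0 of_real_add of_real_mult)
    next
      case 3
      define k where "k = nat (p - n)"
      have k1: "k \<ge> 1" "int k = p - n" using 3 unfolding k_def by auto
      have i1: "n - 1 - p = - int (k + 1)" using k1 by simp
      have i2: "n + 1 - p = - int (k - 1)" using k1 by (simp add: of_nat_diff)
      have i3: "n - p = - int k" using k1 by simp
      have a11: "nat \<bar>n - 1 - p\<bar> = k + 1" unfolding i1 by simp
      have a12: "\<bar>n - 1 - p\<bar> \<le> int L" using k1 3 by linarith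
      have a21: "nat \<bar>n + 1 - p\<bar> = k - 1" unfolding i2 by simp
      have a22: "\<bar>n + 1 - p\<bar> \<le> int L" using k1 3 by linarith
      have a31: "nat \<bar>n - p\<bar> = k" unfolding i3 by simp
      have a32: "\<bar>n - p\<bar> \<le> int L" using k1 3 by linarith
      have e1: "\<psi> (n - 1) = complex_of_real (\<mu> ^ (k + 1))" using a11 a12 unfolding \<psi>_def by simp
      have e2: "\<psi> (n + 1) = complex_of_real (\<mu> ^ (k - 1))" using a21 a22 unfolding \<psi>_def by simp
      have e3: "\<psi> n = complex_of_real (\<mu> ^ k)" using a31 a32 unfolding \<psi>_def by simp
      have Wn': "W n = 4" using Wn 3 by simp
      have "\<mu> ^ (k + 1) + \<mu> ^ (k - 1) + x * \<mu> ^ k = \<mu> ^ (k - 1) * (\<mu>\<^sup>2 + x * \<mu> + 1)"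
      proof -
        obtain m where km: "k = Suc m" using k1 by (cases k) auto
        have "\<mu> ^ (k + 1) = \<mu> ^ (k - 1) * \<mu>\<^sup>2" "\<mu> ^ k = \<mu> ^ (k - 1) * \<mu>"
          unfolding km by (simp_all add: power2_eq_square mult_ac)
        thus ?thesis by (simp add: algebra_simps)
      qed
      hence "\<mu> ^ (k + 1) + \<mu> ^ (k - 1) + x * \<mu> ^ k = 0" using \<mu>q by simp
      thus ?thesis unfolding Top_eq e1 e2 e3 Wn' x_def
        by (metis (no_types, lifting) of_real_0 of_real_add of_real_mult)
    next
      case 4
      thus ?thesis unfolding Top_eq \<psi>_def by auto
    qed
  qed
  have bnd: "cmod (Top W (E j) \<psi> n) \<le> 6 * \<bar>\<mu>\<bar> ^ (L - 1)" for n
  proof (cases "n \<in> S")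
    case False thus ?thesis using zero by simp
  next
    case True
    hence far: "int L \<le> \<bar>n - p\<bar>" unfolding S_def by auto
    have r1: "cmod (\<psi> (n - 1)) \<le> \<bar>\<mu>\<bar> ^ (L - 1)" by (rule \<psi>small) (use far in linarith)
    have r2: "cmod (\<psi> (n + 1)) \<le> \<bar>\<mu>\<bar> ^ (L - 1)" by (rule \<psi>small) (use far in linarith)
    have r3: "cmod (\<psi> n) \<le> \<bar>\<mu>\<bar> ^ (L - 1)" by (rule \<psi>small) (use far in linarith)
    have wr: "\<bar>W n - E j\<bar> \<le> 4" using Wp_range[OF g, of l n] Ej unfolding W_def by simp
    have "cmod (Top W (E j) \<psi> n) \<le> cmod (\<psi> (n - 1) + \<psi> (n + 1)) + cmod (complex_of_real (W n - E j) * \<psi> n)"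
      unfolding Top_eq by (rule norm_triangle_ineq)
    also have "\<dots> \<le> cmod (\<psi> (n - 1)) + cmod (\<psi> (n + 1)) + \<bar>W n - E j\<bar> * cmod (\<psi> n)"
      by (simp add: norm_mult norm_triangle_ineq)
    also have "\<dots> \<le> \<bar>\<mu>\<bar> ^ (L - 1) + \<bar>\<mu>\<bar> ^ (L - 1) + 4 * \<bar>\<mu>\<bar> ^ (L - 1)"
      by (intro add_mono r1 r2 mult_mono wr r3) auto
    finally show ?thesis by simp
  qed
  have Tnb: "nb (Top W (E j) \<psi>) (sqrt (card S) * (6 * \<bar>\<mu>\<bar> ^ (L - 1)))"
  proof (rule nb_finsupp)
    show "finite S" by (simp add: S_def)
  next
    fix n assume "n \<notin> S" thus "Top W (E j) \<psi> n = 0" by (rule zero)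
  next
    fix n show "cmod (Top W (E j) \<psi> n) \<le> 6 * \<bar>\<mu>\<bar> ^ (L - 1)" by (rule bnd)
  qed
  have "sqrt (card S) * (6 * \<bar>\<mu>\<bar> ^ (L - 1)) \<le> 2 * (6 * \<bar>\<mu>\<bar> ^ (L - 1))"
    unfolding S_def by (intro mult_right_mono card4_sqrt) auto
  also have "\<dots> = 12 * \<bar>\<mu>\<bar> ^ (L - 1) * 1" by simp
  also have "\<dots> \<le> 12 * \<bar>\<mu>\<bar> ^ (L - 1) * l2norm \<psi>" using \<psi>norm by (intro mult_left_mono) auto
  finally have "l2norm (Top W (E j) \<psi>) \<le> 12 * \<bar>\<mu>\<bar> ^ (L - 1) * l2norm \<psi>"
    using nb_l2(2)[OF nb_mono[OF Tnb]] by blast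
  from weyl_dist[OF Wp_bd[OF g] \<psi>l2 \<psi>nz this[unfolded W_def]]
  show ?thesis unfolding W_def \<mu>_def x_def .
qed

lemma geo_id:
  assumes x: "x \<ge> 2"
  shows "mufun x ^ nat \<bar>d - 1\<bar> + mufun x ^ nat \<bar>d + 1\<bar> + x * mufun x ^ nat \<bar>d\<bar> = (if d = 0 then sfun x else 0)"
proof -
  define \<mu> where "\<mu> = mufun x"
  have q: "\<mu>\<^sup>2 + x * \<mu> + 1 = 0" unfolding \<mu>_def by (rule mu_quad[OF x])
  have l: "2 * \<mu> + x = sfun x" unfolding \<mu>_def by (rule mu_lin)
  have gen: "\<mu> ^ (k + 1) + \<mu> ^ (k - 1) + x * \<mu> ^ k = 0" if k1: "k \<ge> 1" for k
  proof -
    obtain m where km: "k = Suc m" using k1 by (cases k) auto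
    have "\<mu> ^ (k + 1) + \<mu> ^ (k - 1) + x * \<mu> ^ k = \<mu> ^ m * (\<mu>\<^sup>2 + x * \<mu> + 1)"
      unfolding km by (simp add: power2_eq_square algebra_simps)
    thus ?thesis using q by simp
  qed
  show ?thesis
  proof (cases "d = 0")
    case True thus ?thesis using l unfolding \<mu>_def[symmetric] by simp
  next
    case False
    show ?thesis
    proof (cases "d > 0")
      case True
      define k where "k = nat d"
      have k: "k \<ge> 1" "d = int k" using True unfolding k_def by auto
      have "nat \<bar>d - 1\<bar> = k - 1" "nat \<bar>d + 1\<bar> = k + 1" "nat \<bar>d\<bar> = k" using k by auto
      thus ?thesis using gen[OF k(1)] False unfolding \<mu>_def[symmetric] by (simp add: add.commute)
    next
      case False2: False
      define k where "k = nat (- d)"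
      have k: "k \<ge> 1" "d = - int k" using False False2 unfolding k_def by auto
      have "nat \<bar>d - 1\<bar> = k + 1" "nat \<bar>d + 1\<bar> = k - 1" "nat \<bar>d\<bar> = k" using k by auto
      thus ?thesis using gen[OF k(1)] False unfolding \<mu>_def[symmetric] by simp
    qed
  qed
qed

lemma sfun_sep: assumes "x \<ge> 2" "y \<ge> 2" "sfun x + sfun y > 0"
  shows "\<bar>x - y\<bar> \<le> \<bar>sfun x - sfun y\<bar>"
proof -
  have e: "(sfun x - sfun y) * (sfun x + sfun y) = (x - y) * (x + y)"
    using sfun_sq[OF assms(1)] sfun_sq[OF assms(2)] by (simp add: power2_eq_square algebra_simps)
  have le: "sfun x + sfun y \<le> x + y" using sfun_lt[OF assms(1)] sfun_lt[OF assms(2)] by simp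
  have "\<bar>x - y\<bar> * (sfun x + sfun y) \<le> \<bar>x - y\<bar> * (x + y)" using le by (intro mult_left_mono) auto
  also have "\<dots> = \<bar>sfun x - sfun y\<bar> * (sfun x + sfun y)"
    using e assms by (metis abs_mult abs_of_pos add_pos_pos less_le_trans order.strict_implies_order
        zero_less_numeral dual_order.strict_trans1 abs_of_nonneg add_nonneg_nonneg)
  finally show ?thesis using assms(3) by simp
qed

lemma geo_nb:
  assumes r: "\<bar>\<rho>\<bar> < 1" and s: "s > 0"
  shows "nb (\<lambda>n. complex_of_real (\<rho> ^ nat \<bar>n - p\<bar> / s)) (sqrt (2 / (1 - \<rho>\<^sup>2)) / s)"
  unfolding nb_def
proof (intro allI impI)
  fix F :: "int set" assume F: "finite F"
  have "L2_set (\<lambda>n. cmod (complex_of_real (\<rho> ^ nat \<bar>n - p\<bar> / s))) F = L2_set (\<lambda>n. (1/s) * \<bar>\<rho> ^ nat \<bar>n - p\<bar>\<bar>) F"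
    by (rule L2_set_cong) (use s in \<open>auto simp: norm_divide norm_power power_abs\<close>)
  also have "\<dots> = (1/s) * L2_set (\<lambda>n. \<bar>\<rho> ^ nat \<bar>n - p\<bar>\<bar>) F"
    using L2_set_right_distrib[of "1/s" "\<lambda>n. \<bar>\<rho> ^ nat \<bar>n - p\<bar>\<bar>" F] s by simp
  also have "L2_set (\<lambda>n. \<bar>\<rho> ^ nat \<bar>n - p\<bar>\<bar>) F \<le> sqrt (2 / (1 - \<rho>\<^sup>2))"
    unfolding L2_set_def using geo_sq_sum[OF r F, of p] by (simp add: real_sqrt_le_mono)
  finally show "L2_set (\<lambda>n. cmod (complex_of_real (\<rho> ^ nat \<bar>n - p\<bar> / s))) F \<le> sqrt (2 / (1 - \<rho>\<^sup>2)) / s"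
    using s by (simp add: divide_right_mono)
qed

lemma Top_sum: "Top V z (\<lambda>n. \<Sum>j\<in>A. c j * b j n) n = (\<Sum>j\<in>A. c j * Top V z (b j) n)"
  unfolding Top_eq by (simp add: distrib_left sum.distrib sum_distrib_left mult_ac)

lemma Top_diff_fun: "Top V z (\<lambda>n. a n - b n) n = Top V z a n - Top V z b n"
  unfolding Top_eq by (simp add: algebra_simps)

lemma sum_abs_le_L2: "(\<Sum>j\<in>A. cmod (c j)) \<le> sqrt (card A) * L2_set (\<lambda>j. cmod (c j)) A"
proof -
  have "(\<Sum>j\<in>A. cmod (c j)) = (\<Sum>j\<in>A. \<bar>cmod (c j)\<bar> * \<bar>1\<bar>)" by simp
  also have "\<dots> \<le> L2_set (\<lambda>j. cmod (c j)) A * L2_set (\<lambda>j. 1) A" by (rule L2_set_mult_ineq)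
  also have "L2_set (\<lambda>j. 1::real) A = sqrt (card A)" by (simp add: L2_set_constant)
  finally show ?thesis by (simp add: mult.commute)
qed

lemma geo_id':
  assumes "x \<ge> 2"
  shows "mufun x ^ nat \<bar>n - 1 - q\<bar> + mufun x ^ nat \<bar>n + 1 - q\<bar> + x * mufun x ^ nat \<bar>n - q\<bar>
         = (if n = q then sfun x else 0)"
proof -
  have e: "n - 1 - q = (n - q) - 1" "n + 1 - q = (n - q) + 1" by simp_all
  show ?thesis unfolding e using geo_id[OF assms, of "n - q"] by simp
qed

lemma Top_real: "Top V z (\<lambda>n. complex_of_real (h n)) n = complex_of_real (h (n - 1) + h (n + 1) + (V n - z) * h n)"
  unfolding Top_eq by simp

lemma key_alg1:
  fixes c S r :: complex and F s :: real
  assumes s: "s \<noteq> 0" and D: "s + F \<noteq> 0"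
    and h: "c + complex_of_real (F / (s + F)) * S = complex_of_real (F * s / (s + F)) * r"
  shows "c = complex_of_real F * (r - (c + S) / complex_of_real s)"
proof -
  define cF where "cF = complex_of_real F"
  define cs where "cs = complex_of_real s"
  define Dc where "Dc = cs + cF"
  have s': "cs \<noteq> 0" unfolding cs_def using s by simp
  have D': "Dc \<noteq> 0" unfolding Dc_def cs_def cF_def using D by (simp flip: of_real_add)
  have h': "c + cF / Dc * S = cF * cs / Dc * r" using h unfolding cF_def cs_def Dc_def by simp
  have "c * Dc + cF * S = (c + cF / Dc * S) * Dc" using D' by (simp add: algebra_simps)
  also have "\<dots> = (cF * cs / Dc * r) * Dc" using h' by simp
  also have "\<dots> = cF * cs * r" using D' by simp
  finally have e: "c * Dc + cF * S = cF * cs * r" .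
  have "cF * (r - (c + S) / cs) = (cF * cs * r - cF * (c + S)) / cs" using s' by (simp add: field_simps)
  also have "\<dots> = (c * Dc + cF * S - cF * (c + S)) / cs" unfolding e ..
  also have "\<dots> = c" unfolding Dc_def using s' by (simp add: algebra_simps)
  finally show ?thesis unfolding cF_def cs_def by simp
qed

lemma key_alg2:
  fixes c S :: complex and F s :: real
  assumes s: "s \<noteq> 0" and D: "s + F \<noteq> 0"
    and h: "c = - (complex_of_real F * ((c + S) / complex_of_real s))"
  shows "c = - (complex_of_real (F / (s + F)) * S)"
proof -
  have s': "complex_of_real s \<noteq> 0" and D': "complex_of_real s + complex_of_real F \<noteq> 0"
    using s D by (simp_all flip: of_real_add)
  from h have "c * complex_of_real s = - (complex_of_real F * (c + S))" using s' by (simp add: field_simps)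
  hence "c * (complex_of_real s + complex_of_real F) = - (complex_of_real F * S)" by (simp add: algebra_simps)
  thus ?thesis using D' by (simp add: field_simps)
qed

lemma well_upper:
  assumes g: "goodE J E" and l1: "l \<ge> 1" and z: "z \<le> 3/2" and ep: "0 < ep"
    and far: "\<And>j. j \<le> J \<Longrightarrow> ep \<le> \<bar>z - E j\<bar>"
    and lbig: "real (J + 1) * (4 / ep) * (1/2)^l \<le> 1/2"
  shows "l2_invertible (Top (Wp l J E) z)"
proof -
  define x where "x = 4 - z"
  have x: "x \<ge> 5/2" unfolding x_def using z by simp
  define s where "s = sfun x"
  have s32: "s \<ge> 3/2"
  proof -
    have "s\<^sup>2 = x\<^sup>2 - 4" unfolding s_def by (rule sfun_sq) (use x in simp)
    also have "\<dots> \<ge> (5/2)\<^sup>2 - 4" using power_mono[OF x, of 2] by simp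
    finally have "(3/2)\<^sup>2 \<le> s\<^sup>2" by (simp add: power2_eq_square)
    thus ?thesis by (rule power2_le_imp_le) (use sfun_nonneg[of x] x in \<open>simp add: s_def\<close>)
  qed
  have spos: "s > 0" using s32 by simp
  define \<mu> where "\<mu> = mufun x"
  have \<mu>h: "\<bar>\<mu>\<bar> \<le> 1/2"
  proof -
    have "\<bar>\<mu>\<bar> = 2 / (x + s)" unfolding \<mu>_def s_def by (rule mu_abs) (use x in simp)
    also have "\<dots> \<le> 2 / 4" using x s32 by (intro divide_left_mono) auto
    finally show ?thesis by simp
  qed
  have \<mu>1: "\<bar>\<mu>\<bar> < 1" using \<mu>h by simp
  define W where "W = Wp l J E"
  define T0 where "T0 = Top (\<lambda>_. 4) z"
  have T0inv: "l2_invertible T0" unfolding T0_def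
    by (rule gersh[where B=4 and m=x]) (use x in \<open>auto simp: x_def\<close>)
  obtain R0 C0 where C0: "C0 > 0" and R0l: "\<And>\<psi>. \<psi> \<in> l2 \<Longrightarrow> R0 \<psi> \<in> l2"
    and R0n: "\<And>\<psi>. \<psi> \<in> l2 \<Longrightarrow> l2norm (R0 \<psi>) \<le> C0 * l2norm \<psi>"
    and R0T: "\<And>\<psi>. \<psi> \<in> l2 \<Longrightarrow> R0 (T0 \<psi>) = \<psi>" and TR0: "\<And>\<psi>. \<psi> \<in> l2 \<Longrightarrow> T0 (R0 \<psi>) = \<psi>"
    using inv_obtain[OF T0inv] by metis
  have T0l2: "T0 \<psi> \<in> l2" if "\<psi> \<in> l2" for \<psi> unfolding T0_def by (rule Top_l2(1)[where B=4]) (use that in auto)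
  have T0inj: "a = b" if "a \<in> l2" "b \<in> l2" "T0 a = T0 b" for a b
    by (metis R0T that)
  define I where "I = {0..int J}"
  have finI: "finite I" unfolding I_def by simp
  have cardI: "card I = J + 1" unfolding I_def by simp
  define p where "p i = int l * i" for i :: int
  define sj where "sj i = sfun (4 - E (nat i))" for i :: int
  define u where "u q = (\<lambda>n. complex_of_real (\<mu> ^ nat \<bar>n - q\<bar> / s))" for q :: int
  define G where "G = sqrt (2 / (1 - \<mu>\<^sup>2)) / s"
  have u_nb: "nb (u q) G" for q unfolding u_def G_def by (rule geo_nb[OF \<mu>1 spos])
  have u_l2: "u q \<in> l2" for q using nb_l2[OF u_nb] by blast
  have G0: "0 \<le> G" using nb_nonneg[OF u_nb] .
  have T0u: "T0 (u q) n = (if n = q then 1 else 0)" for q n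
  proof -
    have "T0 (u q) n = complex_of_real ((\<mu> ^ nat \<bar>n - 1 - q\<bar> + \<mu> ^ nat \<bar>n + 1 - q\<bar> + x * \<mu> ^ nat \<bar>n - q\<bar>) / s)"
      unfolding T0_def u_def Top_real x_def by (simp add: add_divide_distrib)
    also have "\<dots> = (if n = q then 1 else 0)"
      unfolding \<mu>_def s_def using geo_id'[of x n q] x spos unfolding s_def by simp
    finally show ?thesis .
  qed
  define isw where "isw n \<longleftrightarrow> 0 \<le> n \<and> n mod int l = 0 \<and> n div int l \<le> int J" for n :: int
  have Wdef: "W n = (if isw n then 4 - sj (n div int l) else 4)" for n
    unfolding W_def Wp_def isw_def sj_def by simp
  have p_isw: "isw (p i) \<and> p i div int l = i" if "i \<in> I" for i
    using that l1 unfolding isw_def p_def I_def by auto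
  have isw_p: "n = p (n div int l) \<and> n div int l \<in> I" if "isw n" for n
    using that unfolding isw_def p_def I_def by (auto simp: mult.commute minus_mod_eq_mult_div[symmetric] div_int_pos_iff)
  have delta: "(\<Sum>j\<in>I. c j * (if n = p j then 1 else 0)) = (if isw n then c (n div int l) else 0)" for c :: "int \<Rightarrow> complex" and n
  proof (cases "isw n")
    case True
    have "(\<Sum>j\<in>I. c j * (if n = p j then 1 else 0)) = (\<Sum>j\<in>I. if j = n div int l then c j else 0)"
    proof (rule sum.cong[OF refl])
      fix j assume j: "j \<in> I"
      have "n = p j \<longleftrightarrow> j = n div int l" using isw_p[OF True] p_isw[OF j] by metis
      thus "c j * (if n = p j then 1 else 0) = (if j = n div int l then c j else 0)" by simp
    qed
    also have "\<dots> = c (n div int l)" using isw_p[OF True] finI by simp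
    finally show ?thesis using True by simp
  next
    case False
    have "n \<noteq> p j" if "j \<in> I" for j using p_isw[OF that] False by auto
    thus ?thesis using False by simp
  qed
  have pdist: "nat \<bar>p i - p j\<bar> = l * nat \<bar>i - j\<bar>" for i j
  proof -
    have "\<bar>p i - p j\<bar> = int l * \<bar>i - j\<bar>" unfolding p_def by (simp add: abs_mult right_diff_distrib[symmetric])
    thus ?thesis by (simp add: nat_mult_distrib)
  qed
  have \<mu>pow: "\<bar>\<mu> ^ (l * nat \<bar>i - j\<bar>)\<bar> \<le> (1/2) ^ l" if "i \<noteq> j" for i j
  proof -
    have "\<bar>\<mu> ^ (l * nat \<bar>i - j\<bar>)\<bar> = \<bar>\<mu>\<bar> ^ (l * nat \<bar>i - j\<bar>)" by (simp add: power_abs)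
    also have "\<dots> \<le> \<bar>\<mu>\<bar> ^ l" using that \<mu>1 by (intro power_decreasing) (auto simp: mult_le_cancel_left1)
    also have "\<dots> \<le> (1/2) ^ l" using \<mu>h by (intro power_mono) auto
    finally show ?thesis .
  qed
  define Sg where "Sg c i = (\<Sum>j\<in>I - {i}. complex_of_real (\<mu> ^ (l * nat \<bar>i - j\<bar>)) * c j)" for c :: "int \<Rightarrow> complex" and i
  define Psi where "Psi c = (\<lambda>n. \<Sum>j\<in>I. c j * u (p j) n)" for c :: "int \<Rightarrow> complex"
  have Psi_at: "Psi c (p i) = (c i + Sg c i) / complex_of_real s" if i: "i \<in> I" for c i
  proof -
    have "Psi c (p i) = c i * u (p i) (p i) + (\<Sum>j\<in>I - {i}. c j * u (p j) (p i))"
      unfolding Psi_def using i finI by (simp add: sum.remove)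
    also have "u (p i) (p i) = 1 / complex_of_real s" unfolding u_def by simp
    also have "(\<Sum>j\<in>I - {i}. c j * u (p j) (p i)) = Sg c i / complex_of_real s"
      unfolding Sg_def sum_divide_distrib u_def
      by (rule sum.cong[OF refl]) (simp add: pdist abs_minus_commute[of "p i"] abs_minus_commute[of _ i] mult.commute)
    finally show ?thesis by (simp add: add_divide_distrib)
  qed
  have T0Psi: "T0 (Psi c) n = (if isw n then c (n div int l) else 0)" for c n
    unfolding Psi_def T0_def Top_sum using delta[of c n] T0u unfolding T0_def by simp
  have Psi_nb: "nb (Psi c) (\<Sum>j\<in>I. cmod (c j) * G)" for c
    unfolding Psi_def by (rule nb_sum[OF finI]) (use u_nb in \<open>auto intro: nb_mono[OF nb_scale]\<close>)
  have Psi_l2: "Psi c \<in> l2" for c using nb_l2[OF Psi_nb] by blast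
  have sjb: "0 \<le> sj i \<and> sj i \<le> 4" if "i \<in> I" for i
  proof -
    have "nat i \<le> J" using that unfolding I_def by auto
    hence "0 \<le> E (nat i)" "E (nat i) < 2" using g unfolding goodE_def by auto
    thus ?thesis unfolding sj_def using sfun_nonneg[of "4 - E (nat i)"] sfun_le4[of "E (nat i)"] by auto
  qed
  have sep: "ep \<le> \<bar>s - sj i\<bar>" if "i \<in> I" for i
  proof -
    have j: "nat i \<le> J" using that unfolding I_def by auto
    hence E2: "E (nat i) < 2" using g unfolding goodE_def by auto
    have "ep \<le> \<bar>x - (4 - E (nat i))\<bar>" using far[OF j] unfolding x_def by simp
    also have "\<dots> \<le> \<bar>s - sj i\<bar>" unfolding s_def sj_def
      by (rule sfun_sep) (use x E2 s32 sfun_nonneg[of "4 - E (nat i)"] in \<open>auto simp: s_def\<close>)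
    finally show ?thesis .
  qed
  have Dnz: "s + - sj i \<noteq> 0" if "i \<in> I" for i using sep[OF that] ep by auto
  define A where "A i = - sj i / (s + - sj i)" for i
  have Ab: "\<bar>A i\<bar> \<le> 4 / ep" if "i \<in> I" for i
  proof -
    have "\<bar>A i\<bar> = sj i / \<bar>s - sj i\<bar>" unfolding A_def using sjb[OF that] by (simp add: abs_divide)
    also have "\<dots> \<le> 4 / ep" using sjb[OF that] sep[OF that] ep by (intro frac_le) auto
    finally show ?thesis .
  qed
  define Lop where "Lop c = (\<lambda>i. if i \<in> I then - (complex_of_real (A i) * Sg c i) else 0)" for c :: "int \<Rightarrow> complex"
  have linL: "lin_on Lop" unfolding lin_on_def Lop_def Sg_def
    by (auto simp: fun_eq_iff sum.distrib sum_distrib_left algebra_simps)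
  have sumc: "(\<Sum>j\<in>I. cmod (c j)) \<le> sqrt (real (J + 1)) * l2norm c" if "c \<in> l2" for c
  proof -
    have "(\<Sum>j\<in>I. cmod (c j)) \<le> sqrt (card I) * L2_set (\<lambda>j. cmod (c j)) I" by (rule sum_abs_le_L2)
    also have "\<dots> \<le> sqrt (card I) * l2norm c" by (intro mult_left_mono l2norm_ge_finite[OF that finI]) auto
    finally show ?thesis unfolding cardI .
  qed
  have Sgb: "cmod (Sg c i) \<le> (1/2) ^ l * (\<Sum>j\<in>I. cmod (c j))" for c i
  proof -
    have "cmod (Sg c i) \<le> (\<Sum>j\<in>I - {i}. cmod (complex_of_real (\<mu> ^ (l * nat \<bar>i - j\<bar>)) * c j))"
      unfolding Sg_def by (rule norm_sum)
    also have "\<dots> \<le> (\<Sum>j\<in>I - {i}. (1/2) ^ l * cmod (c j))"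
    proof (rule sum_mono)
      fix j assume "j \<in> I - {i}"
      hence "i \<noteq> j" by auto
      hence "cmod (complex_of_real (\<mu> ^ (l * nat \<bar>i - j\<bar>))) \<le> (1/2) ^ l"
        using \<mu>pow[OF \<open>i \<noteq> j\<close>] by (simp only: norm_of_real)
      thus "cmod (complex_of_real (\<mu> ^ (l * nat \<bar>i - j\<bar>)) * c j) \<le> (1/2) ^ l * cmod (c j)"
        unfolding norm_mult by (intro mult_right_mono) auto
    qed
    also have "\<dots> \<le> (\<Sum>j\<in>I. (1/2) ^ l * cmod (c j))" using finI by (intro sum_mono2) auto
    finally show ?thesis by (simp add: sum_distrib_left)
  qed
  have Lb: "Lop c \<in> l2 \<and> l2norm (Lop c) \<le> 1/2 * l2norm c" if c: "c \<in> l2" for c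
  proof -
    define B where "B = 4 / ep * ((1/2) ^ l * (sqrt (real (J + 1)) * l2norm c))"
    have pt: "cmod (Lop c i) \<le> B" for i
    proof (cases "i \<in> I")
      case True
      have "cmod (Lop c i) = \<bar>A i\<bar> * cmod (Sg c i)" unfolding Lop_def using True by (simp add: norm_mult)
      also have "\<dots> \<le> 4 / ep * ((1/2) ^ l * (sqrt (real (J + 1)) * l2norm c))"
      proof (rule mult_mono[OF Ab[OF True]])
        show "cmod (Sg c i) \<le> (1/2) ^ l * (sqrt (real (J + 1)) * l2norm c)"
          using order_trans[OF Sgb[of c i] mult_left_mono[OF sumc[OF c], of "(1/2)^l"]] by simp
      qed (use ep in auto)
      finally show ?thesis unfolding B_def .
    next
      case False thus ?thesis unfolding Lop_def B_def using ep l2norm_nonneg[of c] by simp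
    qed
    have nbL: "nb (Lop c) (sqrt (card I) * B)"
    proof (rule nb_finsupp[OF finI])
      fix i :: int assume "i \<notin> I" thus "Lop c i = 0" by (simp add: Lop_def)
    next
      fix i :: int show "cmod (Lop c i) \<le> B" by (rule pt)
    qed
    have "sqrt (card I) * B = (sqrt (real (J + 1)) * sqrt (real (J + 1))) * ((4 / ep) * (1/2)^l * l2norm c)"
      unfolding B_def cardI by (simp only: mult_ac)
    also have "\<dots> = real (J + 1) * ((4 / ep) * (1/2)^l * l2norm c)" by simp
    also have "\<dots> = (real (J + 1) * (4 / ep) * (1/2)^l) * l2norm c" by (simp only: mult_ac)
    also have "\<dots> \<le> 1/2 * l2norm c" by (intro mult_right_mono lbig l2norm_nonneg)
    finally show ?thesis using nb_l2[OF nbL] by auto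
  qed
  have TW: "Top W z \<psi> n = T0 \<psi> n + complex_of_real (W n - 4) * \<psi> n" for \<psi> n
    unfolding T0_def Top_eq by (simp add: algebra_simps)
  show ?thesis unfolding W_def[symmetric]
  proof (rule inv_intro[OF lin_Top])
    fix \<psi> :: "int \<Rightarrow> complex" assume "\<psi> \<in> l2"
    thus "Top W z \<psi> \<in> l2" unfolding W_def by (rule Top_l2(1)[OF Wp_bd[OF g]])
  next
    fix xx :: "int \<Rightarrow> complex" assume xx: "xx \<in> l2" and Txx: "Top W z xx = (\<lambda>n. 0)"
    define c where "c i = (if i \<in> I then complex_of_real (- sj i) * xx (p i) else 0)" for i
    have mPsi: "(\<lambda>n. - Psi c n) \<in> l2" using l2_scale[OF Psi_l2[of c], of "-1"] by simp
    have "T0 xx = T0 (\<lambda>n. - Psi c n)"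
    proof
      fix n
      have z0: "T0 xx n + complex_of_real (W n - 4) * xx n = 0" using fun_cong[OF Txx, of n] TW[of xx n] by metis
      have a: "T0 xx n = - (complex_of_real (W n - 4) * xx n)" using z0 by (simp only: eq_neg_iff_add_eq_0)
      have b: "T0 (\<lambda>n. - Psi c n) n = - T0 (Psi c) n" unfolding T0_def Top_eq by simp
      show "T0 xx n = T0 (\<lambda>n. - Psi c n) n"
        unfolding a b T0Psi using isw_p[of n] p_isw unfolding c_def by (auto simp: Wdef)
    qed
    hence xxeq: "xx = (\<lambda>n. - Psi c n)" by (rule T0inj[OF xx mPsi])
    have cL: "c = Lop c"
    proof
      fix i show "c i = Lop c i"
      proof (cases "i \<in> I")
        case True
        have e1: "c i = complex_of_real (- sj i) * xx (p i)" using True by (simp add: c_def)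
        have e2: "xx (p i) = - ((c i + Sg c i) / complex_of_real s)" using xxeq Psi_at[OF True, of c] by simp
        have "c i = - (complex_of_real (- sj i) * ((c i + Sg c i) / complex_of_real s))"
          using e1 unfolding e2 by (simp only: mult_minus_right)
        hence "c i = - (complex_of_real (- sj i / (s + - sj i)) * Sg c i)"
          by (intro key_alg2) (use spos Dnz[OF True] in auto)
        thus ?thesis unfolding Lop_def A_def using True by simp
      next
        case False thus ?thesis unfolding c_def Lop_def by simp
      qed
    qed
    have cl2: "c \<in> l2"
    proof -
      have "nb c (sqrt (card I) * (4 * l2norm xx))"
      proof (rule nb_finsupp[OF finI])
        fix i show "cmod (c i) \<le> 4 * l2norm xx"
        proof (cases "i \<in> I")
          case True
          have "cmod (c i) = sj i * cmod (xx (p i))" unfolding c_def using True sjb[OF True] by (simp add: norm_mult)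
          also have "\<dots> \<le> 4 * l2norm xx" using sjb[OF True] nb_pt[OF l2_nb[OF xx]] by (intro mult_mono) auto
          finally show ?thesis .
        qed (simp add: c_def l2norm_nonneg)
      qed (simp add: c_def)
      thus ?thesis using nb_l2 by blast
    qed
    have "l2norm c \<le> 1/2 * l2norm c" using Lb[OF cl2] cL by simp
    hence c0: "c = (\<lambda>n. 0)" by (rule l2norm_zero_le[OF cl2]) simp
    show "xx = (\<lambda>n. 0)" unfolding xxeq Psi_def c0 by simp
  next
    fix \<phi> :: "int \<Rightarrow> complex" assume \<phi>: "\<phi> \<in> l2"
    define r where "r = R0 \<phi>"
    have rl2: "r \<in> l2" unfolding r_def by (rule R0l[OF \<phi>])
    have rn: "l2norm r \<le> C0 * l2norm \<phi>" unfolding r_def by (rule R0n[OF \<phi>])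
    define K1 where "K1 = 4 * s / ep"
    define b' where "b' i = (if i \<in> I then complex_of_real (- sj i * s / (s + - sj i)) * r (p i) else 0)" for i
    have b'nb: "nb b' (sqrt (card I) * (K1 * (C0 * l2norm \<phi>)))"
    proof (rule nb_finsupp[OF finI])
      fix i show "cmod (b' i) \<le> K1 * (C0 * l2norm \<phi>)"
      proof (cases "i \<in> I")
        case True
        have "\<bar>- sj i * s / (s + - sj i)\<bar> = sj i * s / \<bar>s - sj i\<bar>" using sjb[OF True] spos by (simp add: abs_divide abs_mult)
        also have "\<dots> \<le> 4 * s / ep" using sjb[OF True] sep[OF True] ep spos by (intro frac_le mult_right_mono) auto
        finally have cb: "\<bar>- sj i * s / (s + - sj i)\<bar> \<le> K1" unfolding K1_def .
        have "cmod (b' i) = \<bar>- sj i * s / (s + - sj i)\<bar> * cmod (r (p i))"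
          using True by (simp only: b'_def if_P norm_mult norm_of_real)
        also have "\<dots> \<le> K1 * (C0 * l2norm \<phi>)"
          using cb nb_pt[OF l2_nb[OF rl2], of "p i"] rn ep spos unfolding K1_def by (intro mult_mono) auto
        finally show ?thesis .
      next
        case False thus ?thesis unfolding b'_def K1_def using ep spos C0 by (simp add: l2norm_nonneg)
      qed
    qed (simp add: b'_def)
    have b'l2: "b' \<in> l2" and b'n: "l2norm b' \<le> sqrt (card I) * (K1 * (C0 * l2norm \<phi>))" using nb_l2[OF b'nb] by auto
    obtain c where c: "c \<in> l2" "(\<lambda>n. c n - Lop c n) = b'" "l2norm c \<le> l2norm b' / (1 - 1/2)"
      using neumann[OF linL _ _ _ b'l2, of "1/2"] Lb by auto
    define \<psi> where "\<psi> = (\<lambda>n. r n - Psi c n)"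
    have \<psi>l2: "\<psi> \<in> l2" unfolding \<psi>_def by (rule l2_diff[OF rl2 Psi_l2])
    have key: "c i = complex_of_real (- sj i) * \<psi> (p i)" if i: "i \<in> I" for i
    proof -
      have "c i - Lop c i = b' i" using c(2) by metis
      hence "c i + complex_of_real (A i) * Sg c i = complex_of_real (- sj i * s / (s + - sj i)) * r (p i)"
        unfolding Lop_def b'_def using i by simp
      hence "c i = complex_of_real (- sj i) * (r (p i) - (c i + Sg c i) / complex_of_real s)"
        unfolding A_def by (intro key_alg1) (use spos Dnz[OF i] in auto)
      thus ?thesis unfolding \<psi>_def Psi_at[OF i] .
    qed
    have T\<psi>: "Top W z \<psi> = \<phi>"
    proof
      fix n
      have a: "T0 \<psi> n = \<phi> n - T0 (Psi c) n" unfolding \<psi>_def T0_def Top_diff_fun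
        using TR0[OF \<phi>] unfolding r_def T0_def by simp
      show "Top W z \<psi> n = \<phi> n"
      proof (cases "isw n")
        case True
        have ip: "n = p (n div int l)" "n div int l \<in> I" using isw_p[OF True] by auto
        have "W n - 4 = - sj (n div int l)" using True by (simp add: Wdef)
        moreover have "\<psi> n = \<psi> (p (n div int l))" using ip(1) by simp
        ultimately show ?thesis unfolding TW a T0Psi using True key[OF ip(2)] by simp
      next
        case False
        thus ?thesis unfolding TW a T0Psi by (simp add: Wdef)
      qed
    qed
    define Cf where "Cf = C0 + sqrt (real (J + 1)) * (2 * (sqrt (real (J + 1)) * (K1 * C0))) * G"
    have "l2norm \<psi> \<le> Cf * l2norm \<phi>"
    proof -
      have nbpsi: "nb \<psi> (l2norm r + (\<Sum>j\<in>I. cmod (c j) * G))"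
        unfolding \<psi>_def by (rule nb_diff[OF l2_nb[OF rl2] Psi_nb])
      have "(\<Sum>j\<in>I. cmod (c j) * G) = (\<Sum>j\<in>I. cmod (c j)) * G" by (simp add: sum_distrib_right)
      also have "\<dots> \<le> (sqrt (real (J + 1)) * l2norm c) * G" by (intro mult_right_mono sumc[OF c(1)] G0)
      also have "\<dots> \<le> (sqrt (real (J + 1)) * (2 * (sqrt (real (J + 1)) * (K1 * (C0 * l2norm \<phi>))))) * G"
      proof -
        have "l2norm c \<le> 2 * l2norm b'" using c(3) by simp
        also have "\<dots> \<le> 2 * (sqrt (real (J + 1)) * (K1 * (C0 * l2norm \<phi>)))" using b'n cardI by simp
        finally show ?thesis by (intro mult_right_mono mult_left_mono G0) auto
      qed
      finally have "l2norm r + (\<Sum>j\<in>I. cmod (c j) * G) \<le> C0 * l2norm \<phi> + (sqrt (real (J + 1)) * (2 * (sqrt (real (J + 1)) * (K1 * (C0 * l2norm \<phi>))))) * G"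
        using rn by linarith
      also have "\<dots> = Cf * l2norm \<phi>" unfolding Cf_def by (simp add: algebra_simps)
      finally show ?thesis using nb_l2(2)[OF nb_mono[OF nbpsi]] by blast
    qed
    thus "\<exists>\<psi>\<in>l2. Top W z \<psi> = \<phi> \<and> l2norm \<psi> \<le> Cf * l2norm \<phi>" using \<psi>l2 T\<psi> by blast
  qed
qed

lemma dH_le:
  assumes a: "\<And>x. x \<in> X \<Longrightarrow> \<exists>y\<in>Y. dist x y \<le> e" and b: "\<And>y. y \<in> Y \<Longrightarrow> \<exists>x\<in>X. dist x y \<le> e"
  shows "dH X Y \<le> ennreal e"
  unfolding dH_def
proof (rule max.boundedI)
  show "(SUP x\<in>X. INF y\<in>Y. ennreal (dist x y)) \<le> ennreal e"
  proof (rule SUP_least)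
    fix x assume x: "x \<in> X"
    then obtain y where y: "y \<in> Y" "dist x y \<le> e" using a by blast
    show "(INF y\<in>Y. ennreal (dist x y)) \<le> ennreal e"
      by (rule INF_lower2[OF y(1)]) (rule ennreal_leI[OF y(2)])
  qed
  show "(SUP y\<in>Y. INF x\<in>X. ennreal (dist x y)) \<le> ennreal e"
  proof (rule SUP_least)
    fix y assume y: "y \<in> Y"
    then obtain x where x: "x \<in> X" "dist x y \<le> e" using b by blast
    show "(INF x\<in>X. ennreal (dist x y)) \<le> ennreal e"
      by (rule INF_lower2[OF x(1)]) (rule ennreal_leI[OF x(2)])
  qed
qed

lemma dH_self: "dH X X = 0"
proof -
  have "dH X X \<le> ennreal 0" by (rule dH_le) auto
  thus ?thesis by simp
qed

lemma INF_zero_closure: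
  assumes "(INF y\<in>Y. ennreal (dist x y)) = 0"
  shows "x \<in> closure Y"
  unfolding closure_approachable
proof (intro allI impI)
  fix e :: real assume e: "e > 0"
  show "\<exists>y\<in>Y. dist y x < e"
  proof (rule ccontr)
    assume "\<not> ?thesis"
    hence "\<forall>y\<in>Y. e \<le> dist x y" by (auto simp: dist_commute)
    hence "ennreal e \<le> (INF y\<in>Y. ennreal (dist x y))" by (auto intro!: INF_greatest ennreal_leI)
    thus False using assms e by simp
  qed
qed

lemma dH_zero_closure:
  assumes "dH X Y = 0"
  shows "X \<subseteq> closure Y" "Y \<subseteq> closure X"
proof -
  show "X \<subseteq> closure Y"
  proof
    fix x assume x: "x \<in> X"
    have "(INF y\<in>Y. ennreal (dist x y)) \<le> (SUP x\<in>X. INF y\<in>Y. ennreal (dist x y))" by (rule SUP_upper[OF x])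
    also have "\<dots> \<le> dH X Y" unfolding dH_def by simp
    finally show "x \<in> closure Y" using assms by (intro INF_zero_closure) simp
  qed
  show "Y \<subseteq> closure X"
  proof
    fix y assume y: "y \<in> Y"
    have "(INF x\<in>X. ennreal (dist x y)) \<le> (SUP y\<in>Y. INF x\<in>X. ennreal (dist x y))" by (rule SUP_upper[OF y])
    also have "\<dots> \<le> dH X Y" unfolding dH_def by simp
    finally have "(INF x\<in>X. ennreal (dist y x)) = 0" using assms by (simp add: dist_commute)
    thus "y \<in> closure X" by (rule INF_zero_closure)
  qed
qed

lemma dH_closed_eq: assumes "closed X" "closed Y" "dH X Y = 0" shows "X = Y"
  using dH_zero_closure[OF assms(3)] assms(1,2) closure_closed by auto

lemma dH_lim: assumes "\<And>k. k \<ge> N \<Longrightarrow> dH X Y \<le> ennreal ((1/2) ^ Suc k)" shows "dH X Y = 0"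
proof -
  have "(\<lambda>k. (1/2::real) ^ Suc k) \<longlonglongrightarrow> 0" by (rule LIMSEQ_Suc[OF LIMSEQ_power_zero]) simp
  hence lim: "(\<lambda>k. ennreal ((1/2) ^ Suc k)) \<longlonglongrightarrow> ennreal 0" by (rule tendsto_ennrealI)
  have "dH X Y \<le> ennreal 0" by (rule LIMSEQ_le_const[OF lim]) (use assms in auto)
  thus ?thesis by simp
qed

lemma Xi_spec: assumes "S \<in> Omega_S1"
  shows "\<exists>V. bounded (range V) \<and> (\<forall>k. dH (S k) (Sp V) \<le> ennreal ((1/2) ^ Suc k)) \<and> Xi_Lm S = measure lebesgue (Sp V)"
proof -
  let ?P = "\<lambda>V. bounded (range V) \<and> (\<forall>k. dH (S k) (Sp V) \<le> ennreal ((1/2) ^ Suc k))"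
  have "\<exists>V. ?P V" using assms unfolding Omega_S1_def by blast
  hence "?P (SOME V. ?P V)" by (rule someI_ex)
  thus ?thesis unfolding Xi_Lm_def by blast
qed

lemma Sp_closed': "bounded (range V) \<Longrightarrow> closed (Sp V)"
  using bounded_V Sp_closed by blast

lemma pow_half_mult: "(2::real) ^ (N + 2) * (1/2) ^ N = 4"
proof -
  have a: "(2::real) ^ N * (1/2) ^ N = (2 * (1/2)) ^ N" by (rule power_mult_distrib[symmetric])
  have "(2::real) ^ (N + 2) * (1/2) ^ N = 4 * ((2::real) ^ N * (1/2) ^ N)"
    by (simp add: power_add)
  thus ?thesis unfolding a by simp
qed

lemma W_exists:
  assumes N1: "N \<ge> 1"
  shows "\<exists>W. bounded (range W) \<and> dH (Sp V0) (Sp W) \<le> ennreal ((1/2) ^ N) \<and> measure lebesgue (Sp W) \<le> 5"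
proof -
  define \<epsilon> :: real where "\<epsilon> = (1/2) ^ N"
  have \<epsilon>0: "\<epsilon> > 0" unfolding \<epsilon>_def by simp
  have \<epsilon>h: "\<epsilon> \<le> 1/2" unfolding \<epsilon>_def using power_decreasing[OF N1, of "1/2::real"] by simp
  define J :: nat where "J = 2 ^ (N + 2) - 2"
  have J2: "(2::nat) \<le> 2 ^ (N + 2)" by (simp add: self_le_power)
  have rJ: "real J * \<epsilon> = 4 - 2 * \<epsilon>"
  proof -
    have hJ: "real J = 2 ^ (N + 2) - 2" unfolding J_def using J2 by (simp add: of_nat_diff)
    have "real J * \<epsilon> = (2 ^ (N + 2) - 2) * \<epsilon>" unfolding hJ ..
    also have "\<dots> = 2 ^ (N + 2) * \<epsilon> - 2 * \<epsilon>" by (rule left_diff_distrib)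
    also have "2 ^ (N + 2) * \<epsilon> = 4" unfolding \<epsilon>_def by (rule pow_half_mult)
    finally show ?thesis .
  qed
  define E :: "nat \<Rightarrow> real" where "E j = real j * \<epsilon> / 2" for j
  have EJ: "E j \<le> 2 - \<epsilon>" if "j \<le> J" for j
  proof -
    have "real j * \<epsilon> \<le> real J * \<epsilon>" using that \<epsilon>0 by (intro mult_right_mono) auto
    thus ?thesis unfolding E_def using rJ by simp
  qed
  have E0: "0 \<le> E j" for j unfolding E_def using \<epsilon>0 by simp
  have g: "goodE J E" unfolding goodE_def using EJ E0 \<epsilon>0 by force
  define ep where "ep = \<epsilon> / 16"
  have ep0: "ep > 0" unfolding ep_def using \<epsilon>0 by simp
  define \<rho>1 where "\<rho>1 = 2 / (2 + \<epsilon>)"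
  have \<rho>1: "0 < \<rho>1" "\<rho>1 < 1" unfolding \<rho>1_def using \<epsilon>0 by auto
  obtain l1 where l1: "(1/2::real) ^ l1 < 1 / (2 * real (J + 1) * (4 / ep))"
    using real_arch_pow_inv[of "1 / (2 * real (J + 1) * (4 / ep))" "1/2"] ep0 by auto
  obtain l2 where l2: "\<rho>1 ^ l2 < \<epsilon> / 48"
    using real_arch_pow_inv[of "\<epsilon> / 48" \<rho>1] \<rho>1 \<epsilon>0 by auto
  define l where "l = l1 + l2 + 3"
  define L where "L = l1 + l2 + 1"
  have l1': "l \<ge> 1" unfolding l_def by simp
  have lbig: "real (J + 1) * (4 / ep) * (1/2)^l \<le> 1/2"
  proof -
    have "(1/2::real) ^ l \<le> (1/2) ^ l1" unfolding l_def by (intro power_decreasing) auto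
    also have "\<dots> \<le> 1 / (2 * real (J + 1) * (4 / ep))" using l1 by simp
    finally have h: "(1/2::real) ^ l \<le> 1 / (2 * real (J + 1) * (4 / ep))" .
    have pos: "0 < real (J + 1) * (4 / ep)" using ep0 by simp
    define X where "X = real (J + 1) * (4 / ep)"
    have X0: "X > 0" unfolding X_def using pos .
    have "real (J + 1) * (4 / ep) * (1/2)^l \<le> X * (1 / (2 * X))"
      using h X0 unfolding X_def by (intro mult_left_mono) (auto simp: mult.assoc)
    also have "\<dots> = 1/2" using X0 by simp
    finally show ?thesis .
  qed
  define W where "W = Wp l J E"
  have Wbd: "\<bar>W n\<bar> \<le> 4" for n unfolding W_def by (rule Wp_bd[OF g])
  have Wb: "bounded (range W)" unfolding bounded_iff using Wbd by (auto simp: real_norm_def)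
  have Wcl: "closed (Sp W)" by (rule Sp_closed[OF Wbd])
  have W_up: "z \<in> {3/2..6} \<or> (\<exists>j\<le>J. \<bar>z - E j\<bar> < ep)" if z: "z \<in> Sp W" for z
  proof (rule ccontr)
    assume nz: "\<not> ?thesis"
    have z6: "z \<le> 6" using Wp_Sp_upper[OF g, of z l] z unfolding W_def by force
    hence z32: "z \<le> 3/2" using nz by auto
    have far: "ep \<le> \<bar>z - E j\<bar>" if "j \<le> J" for j using nz that by force
    have "l2_invertible (Top W z)" unfolding W_def by (rule well_upper[OF g l1' z32 ep0 far lbig])
    thus False using z unfolding Sp_Top by simp
  qed
  have W_lower: "\<exists>w\<in>Sp W. \<bar>w - E j\<bar> \<le> \<epsilon> / 4" if j: "j \<le> J" for j
  proof -
    obtain w where w: "w \<in> Sp W" "\<bar>w - E j\<bar> \<le> 12 * \<bar>mufun (4 - E j)\<bar> ^ (L - 1)"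
      using well_lower[OF g _ _ j, of L l] unfolding W_def L_def l_def by auto
    have xj: "4 - E j > 2" "4 - E j \<ge> 2 + \<epsilon>" using EJ[OF j] \<epsilon>0 by auto
    have "\<bar>mufun (4 - E j)\<bar> \<le> 2 / (4 - E j)" by (rule mu_abs_le[OF xj(1)])
    also have "\<dots> \<le> \<rho>1" unfolding \<rho>1_def using xj \<epsilon>0 by (intro divide_left_mono) auto
    finally have m: "\<bar>mufun (4 - E j)\<bar> \<le> \<rho>1" .
    have "\<bar>mufun (4 - E j)\<bar> ^ (L - 1) \<le> \<rho>1 ^ (L - 1)" by (intro power_mono m) auto
    also have "\<dots> \<le> \<rho>1 ^ l2" unfolding L_def using \<rho>1 by (intro power_decreasing) auto
    also have "\<dots> \<le> \<epsilon> / 48" using l2 by simp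
    finally have "12 * \<bar>mufun (4 - E j)\<bar> ^ (L - 1) \<le> \<epsilon> / 4" by simp
    thus ?thesis using w by force
  qed
  have W_dense: "\<exists>y\<in>Sp W. \<bar>x - y\<bar> \<le> \<epsilon>" if x: "x \<in> {0..6}" for x
  proof (cases "2 \<le> x")
    case True
    have "x \<in> Sp W" unfolding W_def by (rule Wp_Sp_ess[OF g]) (use True x in auto)
    thus ?thesis using \<epsilon>0 by (intro bexI[where x=x]) auto
  next
    case False
    show ?thesis
    proof (cases "2 - \<epsilon> \<le> x")
      case True
      have "2 \<in> Sp W" unfolding W_def by (rule Wp_Sp_ess[OF g]) auto
      thus ?thesis using True False by (intro bexI[where x=2]) auto
    next
      case False2: False
      define j where "j = nat \<lfloor>2 * x / \<epsilon>\<rfloor>"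
      have x0: "0 \<le> x" using x by simp
      have fl0: "0 \<le> \<lfloor>2 * x / \<epsilon>\<rfloor>" using x0 \<epsilon>0 by simp
      have rj: "real j = of_int \<lfloor>2 * x / \<epsilon>\<rfloor>" unfolding j_def using fl0 by simp
      have lo: "real j \<le> 2 * x / \<epsilon>" and hi: "2 * x / \<epsilon> < real j + 1" unfolding rj by linarith+
      have Ej1: "E j \<le> x" unfolding E_def using lo \<epsilon>0 by (simp add: field_simps)
      have Ej2: "x < E j + \<epsilon> / 2" unfolding E_def using hi \<epsilon>0 by (simp add: field_simps)
      have jJ: "j \<le> J"
      proof -
        have "2 * x / \<epsilon> < 2 * (2 - \<epsilon>) / \<epsilon>" using False2 \<epsilon>0 by (intro divide_strict_right_mono) auto
        also have "\<dots> = real J" using rJ \<epsilon>0 by (simp add: field_simps)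
        finally have "real j < real J" using lo by linarith
        thus ?thesis by simp
      qed
      obtain w where w: "w \<in> Sp W" "\<bar>w - E j\<bar> \<le> \<epsilon> / 4" using W_lower[OF jJ] by blast
      have "\<bar>x - w\<bar> \<le> \<epsilon>" using w(2) Ej1 Ej2 by linarith
      thus ?thesis using w(1) by blast
    qed
  qed
  have W_near: "\<exists>x\<in>{0..6}. \<bar>x - y\<bar> \<le> \<epsilon>" if y: "y \<in> Sp W" for y
  proof (cases "y \<in> {3/2..6}")
    case True thus ?thesis using \<epsilon>0 by (intro bexI[where x=y]) auto
  next
    case False
    then obtain j where j: "j \<le> J" "\<bar>y - E j\<bar> < ep" using W_up[OF y] by blast
    have "E j \<le> 2" using EJ[OF j(1)] \<epsilon>0 by simp
    moreover have "- ep < y - E j" "y - E j < ep" using abs_less_iff[THEN iffD1, OF j(2)] by auto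
    moreover have "ep \<le> 1" unfolding ep_def using \<epsilon>h by simp
    ultimately have yb: "- ep < y" "y < 3" using E0[of j] by linarith+
    show ?thesis
    proof (cases "0 \<le> y")
      case True thus ?thesis using yb \<epsilon>0 by (intro bexI[where x=y]) auto
    next
      case False
      have "\<bar>0 - y\<bar> \<le> \<epsilon>" using yb False \<epsilon>0 unfolding ep_def by simp
      thus ?thesis by (intro bexI[where x=0]) auto
    qed
  qed
  have dHb: "dH (Sp V0) (Sp W) \<le> ennreal \<epsilon>"
  proof (rule dH_le)
    fix x assume "x \<in> Sp V0"
    hence "x \<in> {0..6}" using Sp_V0 by simp
    thus "\<exists>y\<in>Sp W. dist x y \<le> \<epsilon>" using W_dense by (auto simp: dist_real_def)
  next
    fix y assume "y \<in> Sp W"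
    then obtain x where "x \<in> {0..6}" "\<bar>x - y\<bar> \<le> \<epsilon>" using W_near by blast
    thus "\<exists>x\<in>Sp V0. dist x y \<le> \<epsilon>" using Sp_V0 by (auto simp: dist_real_def)
  qed
  define U where "U = {3/2..6::real} \<union> (\<Union>j\<in>{..J}. {E j - ep..E j + ep})"
  have sub: "Sp W \<subseteq> U" unfolding U_def using W_up by fastforce
  have Ufm: "U \<in> fmeasurable lebesgue" unfolding U_def
    by (intro fmeasurable.Un fmeasurable.finite_UN) auto
  have "measure lebesgue (Sp W) \<le> measure lebesgue U"
    by (rule measure_mono_fmeasurable[OF sub _ Ufm]) (simp add: Wcl borel_closed)
  also have "\<dots> \<le> measure lebesgue {3/2..6::real} + measure lebesgue (\<Union>j\<in>{..J}. {E j - ep..E j + ep})"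
    unfolding U_def by (rule measure_Un_le) auto
  also have "measure lebesgue (\<Union>j\<in>{..J}. {E j - ep..E j + ep}) \<le> (\<Sum>j\<in>{..J}. measure lebesgue {E j - ep..E j + ep})"
    by (rule measure_UNION_le) auto
  also have "(\<Sum>j\<in>{..J}. measure lebesgue {E j - ep..E j + ep}) = real (J + 1) * (2 * ep)"
    using ep0 by (simp add: measure_completion)
  also have "measure lebesgue {3/2..6::real} = 9/2" by (simp add: measure_completion)
  finally have mb: "measure lebesgue (Sp W) \<le> 9/2 + real (J + 1) * (2 * ep)" by simp
  have "real (J + 1) * (2 * ep) = (real J * \<epsilon> + \<epsilon>) / 8" unfolding ep_def by (simp add: algebra_simps)
  also have "\<dots> \<le> 1/2" using rJ \<epsilon>0 by simp
  finally have "measure lebesgue (Sp W) \<le> 5" using mb by simp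
  thus ?thesis using Wb dHb unfolding \<epsilon>_def by blast
qed

theorem mainTheorem4:
  shows "\<not> Delta1G Xi_Lm Omega_S1 {0..} dist Lambda_S1"
proof
  assume "Delta1G Xi_Lm Omega_S1 {0..} dist Lambda_S1"
  then obtain \<Gamma> :: "nat \<Rightarrow> (nat \<Rightarrow> real set) \<Rightarrow> real" where
    \<Gamma>: "\<forall>n. general_algorithm Omega_S1 Lambda_S1 (\<Gamma> n) \<and>
         (\<forall>A\<in>Omega_S1. \<Gamma> n A \<in> {0..} \<and> dist (\<Gamma> n A) (Xi_Lm A) \<le> (1/2) ^ n)"
    unfolding Delta1G_def by blast
  have ga: "general_algorithm Omega_S1 Lambda_S1 (\<Gamma> 2)" using \<Gamma> by blast
  have acc: "dist (\<Gamma> 2 A) (Xi_Lm A) \<le> 1/4" if "A \<in> Omega_S1" for A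
  proof -
    have "dist (\<Gamma> 2 A) (Xi_Lm A) \<le> (1/2) ^ 2" using \<Gamma> that by blast
    thus ?thesis by (simp add: power2_eq_square)
  qed
  obtain Lf :: "(nat \<Rightarrow> real set) \<Rightarrow> ((nat \<Rightarrow> real set) \<Rightarrow> real set) set" where
    Lf: "\<forall>A\<in>Omega_S1. finite (Lf A) \<and> Lf A \<subseteq> Lambda_S1 \<and>
        (\<forall>B\<in>Omega_S1. (\<forall>f\<in>Lf A. f B = f A) \<longrightarrow> Lf B = Lf A \<and> \<Gamma> 2 B = \<Gamma> 2 A)"
    using ga unfolding general_algorithm_def by blast
  define A where "A = (\<lambda>k::nat. Sp V0)"
  have A\<Omega>: "A \<in> Omega_S1" unfolding Omega_S1_def A_def using V0_bounded dH_self by auto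
  have LfA: "finite (Lf A) \<and> Lf A \<subseteq> Lambda_S1 \<and>
        (\<forall>B\<in>Omega_S1. (\<forall>f\<in>Lf A. f B = f A) \<longrightarrow> Lf B = Lf A \<and> \<Gamma> 2 B = \<Gamma> 2 A)"
    by (rule bspec[OF Lf A\<Omega>])
  have fin: "finite (Lf A)" and sub: "Lf A \<subseteq> Lambda_S1" using LfA by simp_all
  have "\<forall>f\<in>Lf A. \<exists>k. f = (\<lambda>S. S k)" using sub unfolding Lambda_S1_def by auto
  then obtain kf where kf: "\<forall>f\<in>Lf A. f = (\<lambda>S. S (kf f))" by metis
  define N where "N = Suc (Max (insert 0 (kf ` Lf A)))"
  have N1: "N \<ge> 1" unfolding N_def by simp
  have kN: "kf f < N" if "f \<in> Lf A" for f
  proof -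
    have "kf f \<le> Max (insert 0 (kf ` Lf A))" using fin that by (intro Max_ge) auto
    thus ?thesis unfolding N_def by simp
  qed
  obtain W where Wb: "bounded (range W)" and WdH: "dH (Sp V0) (Sp W) \<le> ennreal ((1/2) ^ N)"
    and Wm: "measure lebesgue (Sp W) \<le> 5" using W_exists[OF N1] by blast
  define B where "B = (\<lambda>k. if k < N then Sp V0 else Sp W)"
  have B\<Omega>: "B \<in> Omega_S1" unfolding Omega_S1_def
  proof (intro CollectI exI[where x=W] conjI allI Wb)
    fix k
    show "dH (B k) (Sp W) \<le> ennreal ((1/2) ^ Suc k)"
    proof (cases "k < N")
      case True
      have "(1/2::real) ^ N \<le> (1/2) ^ Suc k" using True by (intro power_decreasing) auto
      hence le: "ennreal ((1/2) ^ N) \<le> ennreal ((1/2) ^ Suc k)" by (rule ennreal_leI)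
      have Bk: "B k = Sp V0" unfolding B_def using True by simp
      show ?thesis unfolding Bk by (rule order_trans[OF WdH le])
    next
      case False thus ?thesis unfolding B_def by (simp add: dH_self)
    qed
  qed
  have agree: "\<forall>f\<in>Lf A. f B = f A"
  proof
    fix f assume f: "f \<in> Lf A"
    have "f B = B (kf f)" "f A = A (kf f)" using kf f by metis+
    thus "f B = f A" using kN[OF f] unfolding A_def B_def by simp
  qed
  have "(\<forall>f\<in>Lf A. f B = f A) \<longrightarrow> Lf B = Lf A \<and> \<Gamma> 2 B = \<Gamma> 2 A"
    using LfA B\<Omega> by (meson bspec)
  hence \<Gamma>eq: "\<Gamma> 2 B = \<Gamma> 2 A" using agree by simp
  have XiA: "Xi_Lm A = 6"
  proof -
    obtain V' where V': "bounded (range V')" "\<forall>k. dH (A k) (Sp V') \<le> ennreal ((1/2) ^ Suc k)"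
      "Xi_Lm A = measure lebesgue (Sp V')" using Xi_spec[OF A\<Omega>] by blast
    have "dH (Sp V0) (Sp V') = 0" by (rule dH_lim[of 0]) (use V'(2) in \<open>simp add: A_def\<close>)
    hence "Sp V0 = Sp V'" by (rule dH_closed_eq[OF Sp_closed'[OF V0_bounded] Sp_closed'[OF V'(1)]])
    hence "Sp V' = {0..6}" using Sp_V0 by simp
    moreover have "measure lebesgue {0..6::real} = 6" by (simp add: measure_completion)
    ultimately show ?thesis using V'(3) by simp
  qed
  have XiB: "Xi_Lm B \<le> 5"
  proof -
    obtain V'' where V'': "bounded (range V'')" "\<forall>k. dH (B k) (Sp V'') \<le> ennreal ((1/2) ^ Suc k)"
      "Xi_Lm B = measure lebesgue (Sp V'')" using Xi_spec[OF B\<Omega>] by blast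
    have "dH (Sp W) (Sp V'') = 0"
    proof (rule dH_lim[of N])
      fix k assume "N \<le> k"
      thus "dH (Sp W) (Sp V'') \<le> ennreal ((1/2) ^ Suc k)" using V''(2)[rule_format, of k] unfolding B_def by simp
    qed
    hence "Sp W = Sp V''" by (rule dH_closed_eq[OF Sp_closed'[OF Wb] Sp_closed'[OF V''(1)]])
    thus ?thesis using V''(3) Wm by simp
  qed
  have "dist (\<Gamma> 2 A) 6 \<le> 1/4" using acc[OF A\<Omega>] XiA by simp
  moreover have "dist (\<Gamma> 2 A) (Xi_Lm B) \<le> 1/4" using acc[OF B\<Omega>] \<Gamma>eq by simp
  ultimately show False using XiB unfolding dist_real_def by linarith
qed

end
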